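(* Let $X$ be a proper $\mathrm{CAT}(0)$ space, and let $G$ be a group acting by isometries on $X$. Let $(g_n)_{n\in\mathbb N}$ be a sequence in $G$ that escapes every compact subspace of $X$. Then there exist a subsequence $(g_{\sigma(n)})_{n\in\mathbb N}$ and points $\xi^-,\xi^+\in\partial_\infty X$ such that for every $\xi\in(\partial_\infty X)^{\mathrm{vis}}\setminus\{\xi^-\}$, the sequence $(g_{\sigma(n)}\xi)_{n\in\mathbb N}$ converges to $\xi^+$.
   Context: $\partial_\infty X$ is the visual boundary with the visual topology. $(\partial_\infty X)^{\mathrm{vis}}$ is the set of visibility points: points $\xi\in\partial_\infty X$ such that every $\eta\in\partial_\infty X$ with $\eta\neq\xi$ can be joined to $\xi$ by a geodesic line in $X$. A sequence $(g_n)$ escapes every compact subspace of $X$ if for some (equivalently any) $x\in X$, $(g_nx)$ eventually leaves every compact subset of $X$. *)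

theory Defs
  imports "HOL-Analysis.Analysis" "HOL-Algebra.Group"
begin

text \<open>The metric space X is the whole type 'a (a metric_space).\<close>

definition proper_sp :: "'a::metric_space itself \<Rightarrow> bool" where
  "proper_sp T \<longleftrightarrow> (\<forall>(x::'a) r. compact (cball x r))"

definition geoseg :: "(real \<Rightarrow> 'a::metric_space) \<Rightarrow> 'a \<Rightarrow> 'a \<Rightarrow> bool" where
  "geoseg \<gamma> x y \<longleftrightarrow> \<gamma> 0 = x \<and> \<gamma> (dist x y) = y \<and>
     (\<forall>s\<in>{0..dist x y}. \<forall>t\<in>{0..dist x y}. dist (\<gamma> s) (\<gamma> t) = \<bar>s - t\<bar>)"

definition geodesic_sp :: "'a::metric_space itself \<Rightarrow> bool" where
  "geodesic_sp T \<longleftrightarrow> (\<forall>x y::'a. \<exists>\<gamma>. geoseg \<gamma> x y)"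

text \<open>Comparison point in the Euclidean plane (complex numbers) on the side [a,b] of length L.\<close>
definition cmp_pt :: "complex \<Rightarrow> complex \<Rightarrow> real \<Rightarrow> real \<Rightarrow> complex" where
  "cmp_pt a b L t = a + complex_of_real (t / L) * (b - a)"

definition side_pairs :: "(real \<Rightarrow> 'a::metric_space) \<Rightarrow> real \<Rightarrow> complex \<Rightarrow> complex \<Rightarrow> ('a \<times> complex) set" where
  "side_pairs \<gamma> L a b = {(\<gamma> t, cmp_pt a b L t) | t. 0 \<le> t \<and> t \<le> L}"

definition CAT0 :: "'a::metric_space itself \<Rightarrow> bool" where
  "CAT0 T \<longleftrightarrow> geodesic_sp T \<and>
    (\<forall>(x::'a) y z \<gamma>1 \<gamma>2 \<gamma>3 a b c.
       geoseg \<gamma>1 x y \<and> geoseg \<gamma>2 y z \<and> geoseg \<gamma>3 z x \<and>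
       dist a b = dist x y \<and> dist b c = dist y z \<and> dist c a = dist z x \<longrightarrow>
       (let S = side_pairs \<gamma>1 (dist x y) a b \<union> side_pairs \<gamma>2 (dist y z) b c
                \<union> side_pairs \<gamma>3 (dist z x) c a
        in \<forall>(p, p')\<in>S. \<forall>(q, q')\<in>S. dist p q \<le> dist p' q'))"

text \<open>Geodesic rays (only values on [0,\<infinity>) matter), asymptoticity, visual boundary.\<close>
definition geo_ray :: "(real \<Rightarrow> 'a::metric_space) \<Rightarrow> bool" where
  "geo_ray c \<longleftrightarrow> (\<forall>s\<ge>0. \<forall>t\<ge>0. dist (c s) (c t) = \<bar>s - t\<bar>)"

definition asymp :: "(real \<Rightarrow> 'a::metric_space) \<Rightarrow> (real \<Rightarrow> 'a) \<Rightarrow> bool" where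
  "asymp c c' \<longleftrightarrow> (\<exists>C. \<forall>t\<ge>0. dist (c t) (c' t) \<le> C)"

definition ray_class :: "(real \<Rightarrow> 'a::metric_space) \<Rightarrow> (real \<Rightarrow> 'a) set" where
  "ray_class c = {c'. geo_ray c' \<and> asymp c c'}"

definition vis_boundary :: "(real \<Rightarrow> 'a::metric_space) set set" where
  "vis_boundary = {ray_class c | c. geo_ray c}"

definition geo_line :: "(real \<Rightarrow> 'a::metric_space) \<Rightarrow> bool" where
  "geo_line c \<longleftrightarrow> (\<forall>s t. dist (c s) (c t) = \<bar>s - t\<bar>)"

definition visibility_pts :: "(real \<Rightarrow> 'a::metric_space) set set" where
  "visibility_pts = {\<xi> \<in> vis_boundary. \<forall>\<eta>\<in>vis_boundary. \<eta> \<noteq> \<xi> \<longrightarrow>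
      (\<exists>c. geo_line c \<and> ray_class c = \<xi> \<and> ray_class (\<lambda>t. c (- t)) = \<eta>)}"

definition vis_basic :: "'a::metric_space \<Rightarrow> (real \<Rightarrow> 'a) set \<Rightarrow> real \<Rightarrow> real \<Rightarrow> (real \<Rightarrow> 'a) set set" where
  "vis_basic x0 \<xi> r \<epsilon> = {\<eta> \<in> vis_boundary. \<exists>c\<in>\<xi>. \<exists>c'\<in>\<eta>.
       c 0 = x0 \<and> c' 0 = x0 \<and> dist (c r) (c' r) < \<epsilon>}"

definition visual_top :: "'a::metric_space \<Rightarrow> (real \<Rightarrow> 'a) set topology" where
  "visual_top x0 = topology_generated_by
     {vis_basic x0 \<xi> r \<epsilon> | \<xi> r \<epsilon>. \<xi> \<in> vis_boundary \<and> r > 0 \<and> \<epsilon> > 0}"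

definition bd_act :: "('a::metric_space \<Rightarrow> 'a) \<Rightarrow> (real \<Rightarrow> 'a) set \<Rightarrow> (real \<Rightarrow> 'a) set" where
  "bd_act f \<xi> = {c'. geo_ray c' \<and> (\<exists>c\<in>\<xi>. asymp (f \<circ> c) c')}"

definition isometry_of :: "('a::metric_space \<Rightarrow> 'a) \<Rightarrow> bool" where
  "isometry_of f \<longleftrightarrow> bij f \<and> (\<forall>x y. dist (f x) (f y) = dist x y)"

definition isom_action :: "('g, 'b) monoid_scheme \<Rightarrow> ('g \<Rightarrow> 'a::metric_space \<Rightarrow> 'a) \<Rightarrow> bool" where
  "isom_action G act \<longleftrightarrow> group G \<and> (\<forall>g\<in>carrier G. isometry_of (act g)) \<and>
     act \<one>\<^bsub>G\<^esub> = id \<and>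
     (\<forall>g\<in>carrier G. \<forall>h\<in>carrier G. act (g \<otimes>\<^bsub>G\<^esub> h) = act g \<circ> act h)"

end

theory Submission
  imports Defs "HOL-Library.Diagonal_Subsequence"
begin

section \<open>Basic geodesic facts\<close>

definition seg :: "'a::metric_space \<Rightarrow> 'a \<Rightarrow> real \<Rightarrow> 'a" where
  "seg x y = (SOME \<gamma>. geoseg \<gamma> x y)"

lemma seg_geoseg:
  assumes "geodesic_sp TYPE('a::metric_space)"
  shows "geoseg (seg x y) x (y::'a)"
proof -
  from assms have "\<exists>\<gamma>. geoseg \<gamma> x y" unfolding geodesic_sp_def by blast
  then show ?thesis unfolding seg_def by (rule someI_ex)
qed

lemma geoseg_dist:
  "geoseg \<gamma> x y \<Longrightarrow> 0 \<le> s \<Longrightarrow> s \<le> dist x y \<Longrightarrow> 0 \<le> t \<Longrightarrow> t \<le> dist x y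
   \<Longrightarrow> dist (\<gamma> s) (\<gamma> t) = \<bar>s - t\<bar>"
  unfolding geoseg_def by auto

lemma geoseg_0: "geoseg \<gamma> x y \<Longrightarrow> \<gamma> 0 = x" unfolding geoseg_def by auto
lemma geoseg_end: "geoseg \<gamma> x y \<Longrightarrow> \<gamma> (dist x y) = y" unfolding geoseg_def by auto

lemma geoseg_dist0:
  assumes "geoseg \<gamma> x y" "0 \<le> s" "s \<le> dist x y"
  shows "dist x (\<gamma> s) = s"
proof -
  have "dist (\<gamma> 0) (\<gamma> s) = \<bar>0 - s\<bar>" using geoseg_dist[OF assms(1), of 0 s] assms by auto
  then show ?thesis using geoseg_0[OF assms(1)] assms by auto
qed

lemma geoseg_dist1:
  assumes "geoseg \<gamma> x y" "0 \<le> s" "s \<le> dist x y"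
  shows "dist (\<gamma> s) y = dist x y - s"
proof -
  have "dist (\<gamma> s) (\<gamma> (dist x y)) = \<bar>s - dist x y\<bar>" using geoseg_dist[OF assms(1), of s "dist x y"] assms by auto
  then show ?thesis using geoseg_end[OF assms(1)] assms by auto
qed

lemma geoseg_sub:
  assumes "geoseg \<gamma> x y" "0 \<le> s" "s \<le> dist x y"
  shows "geoseg \<gamma> x (\<gamma> s)"
  using assms geoseg_dist0[OF assms] unfolding geoseg_def by auto

lemma geoseg_rev:
  assumes "geoseg \<gamma> x y"
  shows "geoseg (\<lambda>t. \<gamma> (dist x y - t)) y x"
  using assms unfolding geoseg_def by (auto simp: dist_commute abs_minus_commute)

lemma geoseg_shift:
  assumes "geoseg \<gamma> x y" "0 \<le> s" "s \<le> dist x y"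
  shows "geoseg (\<lambda>t. \<gamma> (s + t)) (\<gamma> s) y"
proof -
  have d: "dist (\<gamma> s) y = dist x y - s" using geoseg_dist1[OF assms] .
  show ?thesis using assms unfolding geoseg_def d by auto
qed

lemma geoseg_img:
  assumes "geoseg \<gamma> x y" "\<And>a b. dist (f a) (f b) = dist a b"
  shows "geoseg (f \<circ> \<gamma>) (f x) (f y)"
  using assms unfolding geoseg_def by auto

lemma ray_geoseg:
  assumes "geo_ray \<rho>" "0 \<le> T"
  shows "geoseg \<rho> (\<rho> 0) (\<rho> T)"
proof -
  have d: "dist (\<rho> 0) (\<rho> T) = T" using assms unfolding geo_ray_def by force
  show ?thesis using assms unfolding geoseg_def geo_ray_def d by auto
qed

lemma ray_dist0: "geo_ray \<rho> \<Longrightarrow> 0 \<le> T \<Longrightarrow> dist (\<rho> 0) (\<rho> T) = T"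
  unfolding geo_ray_def by force

lemma line_ray: "geo_line c \<Longrightarrow> geo_ray c"
  unfolding geo_line_def geo_ray_def by auto

lemma line_ray_rev: "geo_line c \<Longrightarrow> geo_ray (\<lambda>t. c (-t))"
  unfolding geo_line_def geo_ray_def by (auto simp: abs_minus_commute)

lemma geoseg_cont:
  assumes "geoseg \<gamma> x y"
  shows "continuous_on {0..dist x y} \<gamma>"
  unfolding continuous_on_iff
proof (intro ballI allI impI)
  fix s e assume "s \<in> {0..dist x y}" "(0::real) < e"
  then show "\<exists>d>0. \<forall>t\<in>{0..dist x y}. dist t s < d \<longrightarrow> dist (\<gamma> t) (\<gamma> s) < e"
    using geoseg_dist[OF assms] by (intro exI[of _ e]) (auto simp: dist_real_def)
qed

lemma proper_cauchy:
  assumes "proper_sp TYPE('a::metric_space)" "Cauchy (f :: nat \<Rightarrow> 'a)"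
  shows "\<exists>l. f \<longlonglongrightarrow> l"
proof -
  have "bounded (range f)" using cauchy_imp_bounded[OF assms(2)] .
  then obtain x::'a and r where r: "range f \<subseteq> cball x r" using bounded_subset_cball by blast
  have "compact (cball x r)" using assms(1) unfolding proper_sp_def by blast
  then have "complete (cball x r)" by (rule compact_imp_complete)
  then show ?thesis using r assms(2) unfolding complete_def by blast
qed

section \<open>Comparison triangles\<close>

lemma cmp_tri_ineq:
  fixes A B C :: real
  assumes "A > 0" "B \<ge> 0" "C \<ge> 0" "C \<le> A + B" "A \<le> B + C" "B \<le> A + C"
  defines "u \<equiv> (A^2 + B^2 - C^2) / (2 * A)"
  shows "u^2 \<le> B^2"
proof -
  let ?X = "A^2 + B^2 - C^2"
  have h1: "2*A*B - ?X = (C - A + B) * (C + A - B)" by (simp add: algebra_simps power2_eq_square)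
  have h2: "2*A*B + ?X = (A + B - C) * (A + B + C)" by (simp add: algebra_simps power2_eq_square)
  have "0 \<le> (C - A + B) * (C + A - B)" using assms by (intro mult_nonneg_nonneg) auto
  moreover have "0 \<le> (A + B - C) * (A + B + C)" using assms by (intro mult_nonneg_nonneg) auto
  ultimately have "0 \<le> (2*A*B - ?X) * (2*A*B + ?X)" using h1 h2 by simp
  then have "?X^2 \<le> (2*A*B)^2" by (simp add: algebra_simps power2_eq_square)
  then have "?X^2 / (2*A)^2 \<le> (2*A*B)^2 / (2*A)^2" using assms(1) by (intro divide_right_mono) auto
  also have "(2*A*B)^2 / (2*A)^2 = B^2" using assms(1) by (simp add: power2_eq_square)
  finally show ?thesis unfolding u_def by (simp add: power_divide)
qed

lemma cat0_cmp:
  fixes x y z :: "'a::metric_space"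
  assumes cat: "CAT0 TYPE('a)" and g1: "geoseg \<gamma>1 x y" and g3: "geoseg \<gamma>3 x z"
    and L1: "dist x y > 0" and L2: "dist x z > 0"
    and s: "0 \<le> s" "s \<le> dist x y" and t: "0 \<le> t" "t \<le> dist x z"
  defines "u \<equiv> ((dist x y)^2 + (dist x z)^2 - (dist y z)^2) / (2 * dist x y)"
  shows "u^2 \<le> (dist x z)^2 \<and> cmod (complex_of_real (dist x y) - Complex u (sqrt ((dist x z)^2 - u^2))) = dist y z \<and> dist (\<gamma>1 s) (\<gamma>3 t) \<le>
     cmod (complex_of_real s - complex_of_real (t / dist x z) * Complex u (sqrt ((dist x z)^2 - u^2)))"
proof -
  define A where "A = dist x y"
  define B where "B = dist x z"
  define C where "C = dist y z"
  have uu: "u = (A^2 + B^2 - C^2) / (2 * A)" unfolding u_def A_def B_def C_def by simp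
  have u2: "u^2 \<le> B^2" unfolding uu
    apply (rule cmp_tri_ineq)
    using L1 unfolding A_def B_def C_def
    by (auto intro: dist_triangle3 dist_triangle2 dist_triangle dist_triangle_le
        simp: dist_commute)
  define v where "v = sqrt (B^2 - u^2)"
  have v2: "v^2 = B^2 - u^2" unfolding v_def using u2 by simp
  define c where "c = Complex u v"
  have Apos: "A > 0" and Bpos: "B > 0" using L1 L2 A_def B_def by auto
  have cB: "cmod c = B" unfolding c_def cmod_def using v2 Bpos by simp
  have twoAu: "2 * A * u = A^2 + B^2 - C^2" unfolding uu using Apos by simp
  have "(cmod (complex_of_real A - c))^2 = (A - u)^2 + v^2"
    unfolding c_def cmod_def by (simp add: complex_of_real_def)
  also have "\<dots> = C^2" using v2 twoAu by (simp add: algebra_simps power2_eq_square)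
  finally have cC: "cmod (complex_of_real A - c) = C"
    using C_def by (metis abs_of_nonneg norm_ge_zero real_sqrt_abs zero_le_dist)
  obtain \<gamma>2 where g2: "geoseg \<gamma>2 y z" using cat unfolding CAT0_def geodesic_sp_def by blast
  define \<gamma>3' where "\<gamma>3' = (\<lambda>\<tau>. \<gamma>3 (dist x z - \<tau>))"
  have g3': "geoseg \<gamma>3' z x" unfolding \<gamma>3'_def by (rule geoseg_rev[OF g3])
  have dzx: "dist z x = B" unfolding B_def by (simp add: dist_commute)
  have "dist (0::complex) (complex_of_real A) = dist x y" using Apos A_def by (simp add: dist_norm)
  moreover have "dist (complex_of_real A) c = dist y z" using cC C_def by (simp add: dist_norm)
  moreover have "dist c 0 = dist z x" using cB dzx by (simp add: dist_norm)
  ultimately have H: "let S = side_pairs \<gamma>1 (dist x y) 0 (complex_of_real A) \<union> side_pairs \<gamma>2 (dist y z) (complex_of_real A) c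
                \<union> side_pairs \<gamma>3' (dist z x) c 0
        in \<forall>(p, p')\<in>S. \<forall>(q, q')\<in>S. dist p q \<le> dist p' q'"
    using cat g1 g2 g3' unfolding CAT0_def by blast
  have m1: "(\<gamma>1 s, cmp_pt 0 (complex_of_real A) (dist x y) s) \<in> side_pairs \<gamma>1 (dist x y) 0 (complex_of_real A)"
    unfolding side_pairs_def using s by blast
  have m2: "(\<gamma>3' (B - t), cmp_pt c 0 (dist z x) (B - t)) \<in> side_pairs \<gamma>3' (dist z x) c 0"
    unfolding side_pairs_def dzx using t B_def by auto
  have "dist (\<gamma>1 s) (\<gamma>3' (B - t)) \<le> dist (cmp_pt 0 (complex_of_real A) (dist x y) s) (cmp_pt c 0 (dist z x) (B - t))"
    using H m1 m2 unfolding Let_def by blast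
  moreover have "\<gamma>3' (B - t) = \<gamma>3 t" unfolding \<gamma>3'_def B_def by simp
  moreover have "cmp_pt 0 (complex_of_real A) (dist x y) s = complex_of_real s"
    unfolding cmp_pt_def A_def using Apos A_def by (simp flip: of_real_mult of_real_divide)
  moreover have "cmp_pt c 0 (dist z x) (B - t) = complex_of_real (t / B) * c"
  proof -
    have e: "complex_of_real ((B - t)/B) = 1 - complex_of_real (t/B)" using Bpos by (simp add: diff_divide_distrib)
    show ?thesis unfolding cmp_pt_def dzx e by (simp add: algebra_simps)
  qed
  ultimately have "dist (\<gamma>1 s) (\<gamma>3 t) \<le> cmod (complex_of_real s - complex_of_real (t / B) * c)"
    by (simp add: dist_norm)
  then show ?thesis using u2 cC unfolding c_def v_def B_def A_def C_def by simp
qed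

lemma cat0_F1:
  fixes p q1 q2 :: "'a::metric_space"
  assumes cat: "CAT0 TYPE('a)" and g1: "geoseg \<gamma>1 p q1" and g2: "geoseg \<gamma>2 p q2"
    and l: "0 \<le> l" "l \<le> 1"
  shows "dist (\<gamma>1 (l * dist p q1)) (\<gamma>2 (l * dist p q2)) \<le> l * dist q1 q2"
proof (cases "dist p q1 = 0 \<or> dist p q2 = 0")
  case True
  then show ?thesis
  proof
    assume h: "dist p q1 = 0"
    then have "q1 = p" by simp
    moreover have "dist p (\<gamma>2 (l * dist p q2)) = l * dist p q2"
      using geoseg_dist0[OF g2] l by (simp add: mult_left_le_one_le)
    ultimately show ?thesis using geoseg_0[OF g1] h by simp
  next
    assume h: "dist p q2 = 0"
    then have "q2 = p" by simp
    moreover have "dist p (\<gamma>1 (l * dist p q1)) = l * dist p q1"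
      using geoseg_dist0[OF g1] l by (simp add: mult_left_le_one_le)
    ultimately show ?thesis using geoseg_0[OF g2] h by (simp add: dist_commute)
  qed
next
  case False
  then have L1: "dist p q1 > 0" and L2: "dist p q2 > 0" by auto
  define u where "u = ((dist p q1)^2 + (dist p q2)^2 - (dist q1 q2)^2) / (2 * dist p q1)"
  define c where "c = Complex u (sqrt ((dist p q2)^2 - u^2))"
  have H: "cmod (complex_of_real (dist p q1) - c) = dist q1 q2 \<and> dist (\<gamma>1 (l * dist p q1)) (\<gamma>2 (l * dist p q2)) \<le>
     cmod (complex_of_real (l * dist p q1) - complex_of_real (l * dist p q2 / dist p q2) * c)"
    using cat0_cmp[OF cat g1 g2 L1 L2, of "l * dist p q1" "l * dist p q2"] l L1 L2
    unfolding u_def[symmetric] c_def[symmetric]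
    by (simp add: mult_left_le_one_le)
  have "complex_of_real (l * dist p q1) - complex_of_real (l * dist p q2 / dist p q2) * c
        = complex_of_real l * (complex_of_real (dist p q1) - c)" using L2 by (simp add: algebra_simps)
  then have "cmod (complex_of_real (l * dist p q1) - complex_of_real (l * dist p q2 / dist p q2) * c) = l * dist q1 q2"
    using H l by (simp add: norm_mult)
  then show ?thesis using H by simp
qed

lemma geoseg_unique:
  assumes cat: "CAT0 TYPE('a::metric_space)" and g1: "geoseg \<gamma>1 p (q::'a)" and g2: "geoseg \<gamma>2 p q"
    and t: "0 \<le> t" "t \<le> dist p q"
  shows "\<gamma>1 t = \<gamma>2 t"
proof (cases "dist p q = 0")
  case True then show ?thesis using t geoseg_0[OF g1] geoseg_0[OF g2] by simp
next
  case False
  then have "dist p q > 0" by simp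
  then have "dist (\<gamma>1 ((t / dist p q) * dist p q)) (\<gamma>2 ((t / dist p q) * dist p q)) \<le> (t / dist p q) * dist q q"
    using t by (intro cat0_F1[OF cat g1 g2]) auto
  then show ?thesis using False by simp
qed

lemma cmod_formula:
  "(cmod (complex_of_real s - complex_of_real r * Complex u v))^2 = (s - r * u)^2 + (r * v)^2"
proof -
  have "complex_of_real s - complex_of_real r * Complex u v = Complex (s - r * u) (- (r * v))"
    by (simp add: complex_eq_iff)
  then show ?thesis unfolding cmod_def by simp
qed

lemma cat0_right:
  fixes xo p w :: "'a::metric_space"
  assumes cat: "CAT0 TYPE('a)" and g1: "geoseg \<gamma>1 xo p" and g3: "geoseg \<gamma>3 xo w"
    and h: "(dist xo p)^2 + (dist p w)^2 \<le> (dist xo w)^2" and t: "0 \<le> t" "t \<le> dist xo p"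
  shows "dist (\<gamma>1 t) (\<gamma>3 t) \<le> sqrt 2 * t"
proof (cases "dist xo p = 0")
  case True
  then show ?thesis using t geoseg_0[OF g1] geoseg_0[OF g3] by simp
next
  case False
  then have A: "dist xo p > 0" by simp
  have "(dist xo p)^2 \<le> (dist xo w)^2" using h by (smt (verit) zero_le_power2)
  then have AB: "dist xo p \<le> dist xo w" by (simp add: power2_le_iff_abs_le)
  then have B: "dist xo w > 0" using A by linarith
  define u where "u = ((dist xo p)^2 + (dist xo w)^2 - (dist p w)^2) / (2 * dist xo p)"
  define v where "v = sqrt ((dist xo w)^2 - u^2)"
  have H: "u^2 \<le> (dist xo w)^2 \<and> dist (\<gamma>1 t) (\<gamma>3 t) \<le> cmod (complex_of_real t - complex_of_real (t / dist xo w) * Complex u v)"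
    using cat0_cmp[OF cat g1 g3 A B, of t t] t AB unfolding u_def[symmetric] v_def by simp
  have u0: "u \<ge> 0" unfolding u_def using h A
    by (intro divide_nonneg_pos) (auto, smt (verit) zero_le_power2)
  have v2: "v^2 = (dist xo w)^2 - u^2" unfolding v_def using H by simp
  have "(cmod (complex_of_real t - complex_of_real (t / dist xo w) * Complex u v))^2
        = (t - t / dist xo w * u)^2 + (t / dist xo w * v)^2" by (rule cmod_formula)
  also have "\<dots> = t^2 - 2 * t * (t / dist xo w) * u + (t / dist xo w)^2 * (u^2 + v^2)"
    by (simp add: power2_eq_square algebra_simps add_divide_distrib)
  also have "\<dots> = 2 * t^2 - 2 * t^2 * u / dist xo w" using B v2
    by (simp add: power_divide power2_eq_square)
  also have "\<dots> \<le> 2 * t^2" using u0 B by (simp add: divide_nonneg_pos)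
  finally have "cmod (complex_of_real t - complex_of_real (t / dist xo w) * Complex u v) \<le> sqrt (2 * t^2)"
    by (simp add: real_le_rsqrt)
  also have "sqrt (2 * t^2) = sqrt 2 * t" using t by (simp add: real_sqrt_mult)
  finally show ?thesis using H by simp
qed

lemma cat0_proj:
  fixes xo p w :: "'a::metric_space"
  assumes cat: "CAT0 TYPE('a)" and g1: "geoseg \<gamma>1 p xo" and g3: "geoseg \<gamma>3 p w"
    and mn: "\<And>\<tau>. 0 \<le> \<tau> \<Longrightarrow> \<tau> \<le> dist p w \<Longrightarrow> dist xo p \<le> dist xo (\<gamma>3 \<tau>)"
  shows "(dist xo p)^2 + (dist p w)^2 \<le> (dist xo w)^2"
proof (cases "dist p xo = 0 \<or> dist p w = 0")
  case True
  then show ?thesis by auto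
next
  case False
  then have A: "dist p xo > 0" and B: "dist p w > 0" by auto
  define u where "u = ((dist p xo)^2 + (dist p w)^2 - (dist xo w)^2) / (2 * dist p xo)"
  define v where "v = sqrt ((dist p w)^2 - u^2)"
  show ?thesis
  proof (rule ccontr)
    assume "\<not> ?thesis"
    then have u0: "u > 0" unfolding u_def using A by (simp add: dist_commute)
    define \<tau> where "\<tau> = min (dist p w) (dist p xo * u / dist p w)"
    have tpos: "\<tau> > 0" unfolding \<tau>_def using A B u0 by simp
    have tle: "\<tau> \<le> dist p w" "\<tau> \<le> dist p xo * u / dist p w" unfolding \<tau>_def by auto
    have H: "u^2 \<le> (dist p w)^2 \<and> dist (\<gamma>1 (dist p xo)) (\<gamma>3 \<tau>) \<le> cmod (complex_of_real (dist p xo) - complex_of_real (\<tau> / dist p w) * Complex u v)"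
      using cat0_cmp[OF cat g1 g3 A B, of "dist p xo" \<tau>] tpos tle unfolding u_def[symmetric] v_def by simp
    have v2: "v^2 = (dist p w)^2 - u^2" unfolding v_def using H by simp
    have "(cmod (complex_of_real (dist p xo) - complex_of_real (\<tau> / dist p w) * Complex u v))^2
        = (dist p xo - \<tau> / dist p w * u)^2 + (\<tau> / dist p w * v)^2" by (rule cmod_formula)
    also have "\<dots> = (dist p xo)^2 - 2 * dist p xo * (\<tau> / dist p w) * u + (\<tau> / dist p w)^2 * (u^2 + v^2)"
      by (simp add: power2_eq_square algebra_simps add_divide_distrib)
    also have "\<dots> = (dist p xo)^2 - 2 * dist p xo * \<tau> * u / dist p w + \<tau>^2" using B v2
      by (simp add: power_divide)
    also have "\<dots> \<le> (dist p xo)^2 - dist p xo * \<tau> * u / dist p w"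
    proof -
      have "\<tau> * \<tau> \<le> \<tau> * (dist p xo * u / dist p w)" using tle tpos by (intro mult_left_mono) auto
      moreover have "\<tau> * (dist p xo * u / dist p w) = dist p xo * \<tau> * u / dist p w" by simp
      ultimately have "\<tau>^2 \<le> dist p xo * \<tau> * u / dist p w" unfolding power2_eq_square by linarith
      moreover have "2 * dist p xo * \<tau> * u / dist p w = 2 * (dist p xo * \<tau> * u / dist p w)" by simp
      ultimately show ?thesis by (smt (verit))
    qed
    also have "\<dots> < (dist p xo)^2" using A B u0 tpos by simp
    finally have "cmod (complex_of_real (dist p xo) - complex_of_real (\<tau> / dist p w) * Complex u v) < dist p xo"
      using A by (smt (verit) norm_ge_zero power_mono)
    then have "dist xo (\<gamma>3 \<tau>) < dist xo p" using H geoseg_end[OF g1] by (simp add: dist_commute)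
    then show False using mn[of \<tau>] tpos tle by simp
  qed
qed

lemma segclose:
  fixes x0 p1 p2 :: "'a::metric_space"
  assumes cat: "CAT0 TYPE('a)" and g1: "geoseg \<gamma>1 x0 p1" and g2: "geoseg \<gamma>2 x0 p2"
    and L1: "dist x0 p1 > 0" and d: "dist p1 p2 \<le> \<delta>"
    and t: "0 \<le> t" "t \<le> dist x0 p1" "t \<le> dist x0 p2"
  shows "dist (\<gamma>1 t) (\<gamma>2 t) \<le> 2 * t * \<delta> / dist x0 p1"
proof -
  define l where "l = t / dist x0 p1"
  have l: "0 \<le> l" "l \<le> 1" unfolding l_def using t L1 by auto
  have lt: "l * dist x0 p1 = t" unfolding l_def using L1 by simp
  have "dist (\<gamma>1 (l * dist x0 p1)) (\<gamma>2 (l * dist x0 p2)) \<le> l * dist p1 p2"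
    by (rule cat0_F1[OF cat g1 g2 l])
  also have "\<dots> \<le> l * \<delta>" using d l by (simp add: mult_left_mono)
  finally have a: "dist (\<gamma>1 t) (\<gamma>2 (l * dist x0 p2)) \<le> l * \<delta>" using lt by simp
  have "dist (\<gamma>2 (l * dist x0 p2)) (\<gamma>2 t) = \<bar>l * dist x0 p2 - t\<bar>"
    using l t by (intro geoseg_dist[OF g2]) (auto simp: mult_left_le_one_le)
  also have "\<dots> = l * \<bar>dist x0 p2 - dist x0 p1\<bar>" using lt l
    by (metis abs_mult abs_of_nonneg right_diff_distrib)
  also have "\<dots> \<le> l * \<delta>"
  proof -
    have "\<bar>dist x0 p2 - dist x0 p1\<bar> \<le> dist p1 p2"
      by (smt (verit) dist_commute dist_triangle)
    then show ?thesis using d l by (intro mult_left_mono) auto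
  qed
  finally have b: "dist (\<gamma>2 (l * dist x0 p2)) (\<gamma>2 t) \<le> l * \<delta>" .
  have "dist (\<gamma>1 t) (\<gamma>2 t) \<le> l * \<delta> + l * \<delta>"
    using a b dist_triangle[of "\<gamma>1 t" "\<gamma>2 t" "\<gamma>2 (l * dist x0 p2)"] by linarith
  also have "\<dots> = 2 * t * \<delta> / dist x0 p1" unfolding l_def by simp
  finally show ?thesis .
qed

lemma segray:
  fixes x0 w :: "'a::metric_space"
  assumes cat: "CAT0 TYPE('a)" and r: "geo_ray \<rho>" "\<rho> 0 = x0" and g: "geoseg \<sigma> x0 w"
    and d: "dist (\<rho> T) w \<le> C" and T: "T > 0" and t: "0 \<le> t" "t \<le> T" "t \<le> dist x0 w"
  shows "dist (\<rho> t) (\<sigma> t) \<le> 2 * t * C / T"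
proof -
  have g1: "geoseg \<rho> x0 (\<rho> T)" using ray_geoseg[OF r(1)] T r(2) by auto
  have dT: "dist x0 (\<rho> T) = T" using ray_dist0[OF r(1)] T r(2) by auto
  show ?thesis using segclose[OF cat g1 g, of C t] d T t dT by simp
qed

lemma ray_unique:
  fixes \<rho>1 \<rho>2 :: "real \<Rightarrow> 'a::metric_space"
  assumes cat: "CAT0 TYPE('a)" and r1: "geo_ray \<rho>1" and r2: "geo_ray \<rho>2" and e: "\<rho>1 0 = \<rho>2 0"
    and C: "\<And>t. t \<ge> 0 \<Longrightarrow> dist (\<rho>1 t) (\<rho>2 t) \<le> C" and t: "t \<ge> 0"
  shows "\<rho>1 t = \<rho>2 t"
proof (rule ccontr)
  assume ne: "\<rho>1 t \<noteq> \<rho>2 t"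
  then have dpos: "dist (\<rho>1 t) (\<rho>2 t) > 0" by simp
  have C0: "C \<ge> 0" using C[OF t] by (smt (verit) zero_le_dist)
  define T where "T = t + 1 + 2 * t * C / dist (\<rho>1 t) (\<rho>2 t)"
  have "2 * t * C / dist (\<rho>1 t) (\<rho>2 t) \<ge> 0" using t C0 dpos by simp
  then have Tpos: "T > 0" and tT: "t \<le> T" unfolding T_def using t by auto
  have g2: "geoseg \<rho>2 (\<rho>1 0) (\<rho>2 T)" using ray_geoseg[OF r2] Tpos e by auto
  have "dist (\<rho>1 t) (\<rho>2 t) \<le> 2 * t * C / T"
    using segray[OF cat r1 refl g2 C[OF less_imp_le[OF Tpos]] Tpos t tT] Tpos tT ray_dist0[OF r2, of T] e by (simp add: less_imp_le)
  also have "\<dots> < dist (\<rho>1 t) (\<rho>2 t)"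
  proof -
    have "2 * t * C < dist (\<rho>1 t) (\<rho>2 t) * T"
    proof -
      have "dist (\<rho>1 t) (\<rho>2 t) * T = dist (\<rho>1 t) (\<rho>2 t) * (t + 1) + 2 * t * C"
        unfolding T_def using dpos by (simp add: algebra_simps)
      moreover have "dist (\<rho>1 t) (\<rho>2 t) * (t + 1) > 0" using dpos t by simp
      ultimately show ?thesis by linarith
    qed
    then show ?thesis using Tpos by (simp add: divide_less_eq)
  qed
  finally show False by simp
qed

lemma lim_dist_le:
  fixes f g :: "nat \<Rightarrow> 'a::metric_space"
  assumes "f \<longlonglongrightarrow> a" "g \<longlonglongrightarrow> b" "eventually (\<lambda>n. dist (f n) (g n) \<le> c) sequentially"
  shows "dist a b \<le> c"
  using tendsto_upperbound[OF tendsto_dist[OF assms(1,2)] assms(3)] by simp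

lemma lim_dist_eq:
  fixes f g :: "nat \<Rightarrow> 'a::metric_space"
  assumes "f \<longlonglongrightarrow> a" "g \<longlonglongrightarrow> b" "eventually (\<lambda>n. dist (f n) (g n) = c) sequentially"
  shows "dist a b = c"
proof -
  have "(\<lambda>n. dist (f n) (g n)) \<longlonglongrightarrow> dist a b" by (intro tendsto_dist assms)
  moreover have "(\<lambda>n. dist (f n) (g n)) \<longlonglongrightarrow> c"
    using assms(3) by (rule tendsto_eventually[OF eventually_mono]) auto
  ultimately show ?thesis using LIMSEQ_unique by blast
qed

lemma ray_seg_near:
  fixes x0 :: "'a::metric_space"
  assumes cat: "CAT0 TYPE('a)" and r: "geo_ray \<gamma>" and g: "geoseg \<sigma> x0 (\<gamma> T')"
    and T': "T' > 0" and \<tau>: "0 \<le> \<tau>" "\<tau> \<le> T'"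
  shows "dist (\<sigma> (\<tau> * dist x0 (\<gamma> T') / T')) (\<gamma> \<tau>) \<le> dist x0 (\<gamma> 0)"
proof -
  define L where "L = dist x0 (\<gamma> T')"
  have grev: "geoseg (\<lambda>s. \<sigma> (L - s)) (\<gamma> T') x0" unfolding L_def by (rule geoseg_rev[OF g])
  have dT: "dist (\<gamma> 0) (\<gamma> T') = T'" using ray_dist0[OF r] T' by simp
  have rrev: "geoseg (\<lambda>s. \<gamma> (T' - s)) (\<gamma> T') (\<gamma> 0)"
    using geoseg_rev[OF ray_geoseg[OF r, of T']] T' dT by simp
  define l where "l = (T' - \<tau>) / T'"
  have l: "0 \<le> l" "l \<le> 1" unfolding l_def using T' \<tau> by auto
  have "dist ((\<lambda>s. \<sigma> (L - s)) (l * dist (\<gamma> T') x0)) ((\<lambda>s. \<gamma> (T' - s)) (l * dist (\<gamma> T') (\<gamma> 0)))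
        \<le> l * dist x0 (\<gamma> 0)"
    by (rule cat0_F1[OF cat grev rrev l])
  moreover have "L - l * dist (\<gamma> T') x0 = \<tau> * dist x0 (\<gamma> T') / T'"
    unfolding l_def L_def using T' by (simp add: dist_commute field_simps)
  moreover have "T' - l * dist (\<gamma> T') (\<gamma> 0) = \<tau>"
    unfolding l_def using T' dT by (simp add: dist_commute field_simps)
  moreover have "l * dist x0 (\<gamma> 0) \<le> dist x0 (\<gamma> 0)" using l by (simp add: mult_left_le_one_le)
  ultimately show ?thesis by simp
qed

lemma ray_seg_close:
  fixes x0 :: "'a::metric_space"
  assumes cat: "CAT0 TYPE('a)" and r: "geo_ray \<gamma>" and g: "geoseg \<sigma> x0 (\<gamma> T')"
    and T': "T' > 0" and \<tau>: "0 \<le> \<tau>" "\<tau> \<le> T'" "\<tau> \<le> dist x0 (\<gamma> T')"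
  shows "dist (\<sigma> \<tau>) (\<gamma> \<tau>) \<le> dist x0 (\<gamma> 0) + \<tau> * dist x0 (\<gamma> 0) / T'"
proof -
  define L where "L = dist x0 (\<gamma> T')"
  define D where "D = dist x0 (\<gamma> 0)"
  have dT: "dist (\<gamma> 0) (\<gamma> T') = T'" using ray_dist0[OF r] T' by simp
  have LT: "\<bar>L - T'\<bar> \<le> D" unfolding L_def D_def using dT
    by (smt (verit) dist_commute dist_triangle)
  have a: "dist (\<sigma> (\<tau> * L / T')) (\<gamma> \<tau>) \<le> D" unfolding L_def D_def by (rule ray_seg_near[OF cat r g T' \<tau>(1,2)])
  have "\<tau> * L \<le> T' * L" using \<tau> unfolding L_def by (intro mult_right_mono) auto
  then have tl: "\<tau> * L / T' \<le> L" using T' by (simp add: divide_le_eq mult.commute)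
  have tl0: "0 \<le> \<tau> * L / T'" using \<tau> T' unfolding L_def by simp
  have "dist (\<sigma> \<tau>) (\<sigma> (\<tau> * L / T')) = \<bar>\<tau> - \<tau> * L / T'\<bar>"
    using tl tl0 \<tau> unfolding L_def by (intro geoseg_dist[OF g]) auto
  also have "\<tau> - \<tau> * L / T' = \<tau> * (T' - L) / T'" using T' by (simp add: field_simps)
  also have "\<bar>\<tau> * (T' - L) / T'\<bar> = \<tau> * \<bar>T' - L\<bar> / T'" using T' \<tau> by (simp add: abs_mult)
  also have "\<dots> \<le> \<tau> * D / T'" using LT T' \<tau> by (intro divide_right_mono mult_left_mono) auto
  finally have b: "dist (\<sigma> \<tau>) (\<sigma> (\<tau> * L / T')) \<le> \<tau> * D / T'" .
  show ?thesis using a b dist_triangle[of "\<sigma> \<tau>" "\<gamma> \<tau>" "\<sigma> (\<tau> * L / T')"] unfolding D_def by linarith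
qed

lemma ray_seg_cauchy:
  fixes x0 :: "'a::metric_space"
  assumes cat: "CAT0 TYPE('a)" and r: "geo_ray \<gamma>" and g: "geoseg \<sigma> x0 (\<gamma> T)"
    and g': "geoseg \<sigma>' x0 (\<gamma> T')" and TT: "dist x0 (\<gamma> 0) < T" "T \<le> T'"
    and t: "0 \<le> t" "t \<le> T - dist x0 (\<gamma> 0)"
  shows "dist (\<sigma> t) (\<sigma>' t) \<le> 2 * t * dist x0 (\<gamma> 0) / (T - dist x0 (\<gamma> 0))"
proof -
  define D where "D = dist x0 (\<gamma> 0)"
  define L' where "L' = dist x0 (\<gamma> T')"
  have D0: "D \<ge> 0" unfolding D_def by simp
  have Tpos: "T > 0" "T' > 0" using TT D0 D_def by linarith+
  have dT: "dist (\<gamma> 0) (\<gamma> T) = T" "dist (\<gamma> 0) (\<gamma> T') = T'" using ray_dist0[OF r] Tpos by auto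
  have LT: "dist x0 (\<gamma> T) \<ge> T - D" unfolding D_def using dT by (smt (verit) dist_commute dist_triangle)
  have LT': "L' \<ge> T' - D" unfolding D_def L'_def using dT by (smt (verit) dist_commute dist_triangle)
  define q where "q = \<sigma>' (T * L' / T')"
  have near: "dist (\<sigma>' (T * L' / T')) (\<gamma> T) \<le> D"
    unfolding D_def L'_def by (rule ray_seg_near[OF cat r g' Tpos(2)]) (use Tpos TT in auto)
  have q0: "0 \<le> T * L' / T'" using Tpos unfolding L'_def by simp
  have q1: "T * L' / T' \<le> L'" using Tpos TT unfolding L'_def by (simp add: divide_le_eq mult_right_mono mult.commute)
  have gq: "geoseg \<sigma>' x0 q" unfolding q_def using geoseg_sub[OF g' q0] q1 unfolding L'_def by simp
  have dq: "dist x0 q = T * L' / T'" unfolding q_def using geoseg_dist0[OF g' q0] q1 unfolding L'_def by simp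
  have "T * L' / T' \<ge> T * (T' - D) / T'" using LT' Tpos by (intro divide_right_mono mult_left_mono) auto
  moreover have "T * (T' - D) / T' = T - T * D / T'" using Tpos by (simp add: field_simps)
  moreover have "T * D / T' \<le> D"
  proof -
    have "T * D \<le> T' * D" using TT D0 by (intro mult_right_mono) auto
    then show ?thesis using Tpos by (simp add: divide_le_eq mult.commute)
  qed
  ultimately have dqT: "dist x0 q \<ge> T - D" unfolding dq by linarith
  have pos: "dist x0 (\<gamma> T) > 0" using LT TT D_def by linarith
  have "dist (\<sigma> t) (\<sigma>' t) \<le> 2 * t * D / dist x0 (\<gamma> T)"
    using segclose[OF cat g gq pos, of D t] near t LT dqT unfolding q_def D_def
    by (simp add: dist_commute)
  also have "\<dots> \<le> 2 * t * D / (T - D)"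
  proof (rule divide_left_mono)
    show "T - D \<le> dist x0 (\<gamma> T)" using LT .
    show "0 \<le> 2 * t * D" using t D0 by simp
    show "0 < dist x0 (\<gamma> T) * (T - D)" using pos TT D_def by simp
  qed
  finally show ?thesis unfolding D_def .
qed

lemma CAT0_geodesic: "CAT0 TYPE('a::metric_space) \<Longrightarrow> geodesic_sp TYPE('a)"
  unfolding CAT0_def by blast

lemma ray_exist:
  fixes x0 :: "'a::metric_space"
  assumes cat: "CAT0 TYPE('a)" and pr: "proper_sp TYPE('a)" and r: "geo_ray \<gamma>"
  shows "\<exists>\<rho>. geo_ray \<rho> \<and> \<rho> 0 = x0 \<and> (\<forall>t\<ge>0. dist (\<rho> t) (\<gamma> t) \<le> 2 * dist x0 (\<gamma> 0))"
proof -
  have geod: "geodesic_sp TYPE('a)" using CAT0_geodesic[OF cat] .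
  define D where "D = dist x0 (\<gamma> 0)"
  have D0: "D \<ge> 0" unfolding D_def by simp
  define S where "S n = seg x0 (\<gamma> (real n))" for n :: nat
  have gS: "geoseg (S n) x0 (\<gamma> (real n))" for n unfolding S_def by (rule seg_geoseg[OF geod])
  have LS: "dist x0 (\<gamma> (real n)) \<ge> real n - D" for n
  proof -
    have "dist (\<gamma> 0) (\<gamma> (real n)) = real n" using ray_dist0[OF r] by simp
    then show ?thesis unfolding D_def by (smt (verit) dist_commute dist_triangle)
  qed
  have conv: "convergent (\<lambda>n. S n t)" if t: "t \<ge> 0" for t
  proof -
    have "Cauchy (\<lambda>n. S n t)"
      unfolding Cauchy_def
    proof (intro allI impI)
      fix e :: real assume e: "e > 0"
      obtain M :: nat where M: "real M > D + t + 2 * t * D / e + 1" using reals_Archimedean2 by blast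
      have key: "dist (S m t) (S n t) < e" if mn: "M \<le> m" "m \<le> n" for m n
      proof -
        have m: "real m > D + t + 2 * t * D / e + 1" using M mn by linarith
        have "2 * t * D / e \<ge> 0" using t D0 e by simp
        then have mD: "real m - D > 0" "t \<le> real m - D" using m t by linarith+
        have "dist (S m t) (S n t) \<le> 2 * t * D / (real m - D)"
          using ray_seg_cauchy[OF cat r gS[of m] gS[of n]] mD mn t unfolding D_def by simp
        also have "\<dots> < e"
        proof -
          have "2 * t * D = e * (2 * t * D / e)" using e by simp
          also have "\<dots> < e * (real m - D)"
          proof (rule mult_strict_left_mono)
            show "2 * t * D / e < real m - D" using m t by linarith
          qed (use e in auto)
          finally show ?thesis using mD by (simp add: divide_less_eq mult.commute)
        qed
        finally show ?thesis .
      qed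
      show "\<exists>M. \<forall>m\<ge>M. \<forall>n\<ge>M. dist (S m t) (S n t) < e"
      proof (intro exI allI impI)
        fix m n assume "M \<le> m" "M \<le> n"
        then show "dist (S m t) (S n t) < e"
          using key[of m n] key[of n m] by (cases "m \<le> n") (auto simp: dist_commute)
      qed
    qed
    then show ?thesis using proper_cauchy[OF pr] unfolding convergent_def by blast
  qed
  define \<rho> where "\<rho> t = lim (\<lambda>n. S n t)" for t
  have lim: "(\<lambda>n. S n t) \<longlonglongrightarrow> \<rho> t" if "t \<ge> 0" for t
    unfolding \<rho>_def using conv[OF that] by (simp add: convergent_LIMSEQ_iff)
  have S0: "S n 0 = x0" for n using geoseg_0[OF gS[of n]] .
  have r0: "\<rho> 0 = x0"
  proof -
    have "(\<lambda>n. S n 0) \<longlonglongrightarrow> x0" using S0 by simp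
    then show ?thesis using lim[of 0] LIMSEQ_unique by auto
  qed
  have ray: "geo_ray \<rho>" unfolding geo_ray_def
  proof (intro allI impI)
    fix s t :: real assume st: "s \<ge> 0" "t \<ge> 0"
    have "eventually (\<lambda>n. dist (S n s) (S n t) = \<bar>s - t\<bar>) sequentially"
      unfolding eventually_sequentially
    proof (intro exI allI impI)
      fix n assume "nat \<lceil>D + s + t\<rceil> \<le> n"
      then have "real n \<ge> D + s + t" by linarith
      then show "dist (S n s) (S n t) = \<bar>s - t\<bar>"
        using LS[of n] st by (intro geoseg_dist[OF gS]) auto
    qed
    then show "dist (\<rho> s) (\<rho> t) = \<bar>s - t\<bar>" using lim_dist_eq[OF lim lim] st by simp
  qed
  have bd: "dist (\<rho> t) (\<gamma> t) \<le> 2 * D" if t: "t \<ge> 0" for t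
  proof -
    have "eventually (\<lambda>n. dist (S n t) (\<gamma> t) \<le> 2 * D) sequentially"
      unfolding eventually_sequentially
    proof (intro exI allI impI)
      fix n assume "nat \<lceil>D + t\<rceil> + 1 \<le> n"
      then have n: "real n \<ge> D + t + 1" by linarith
      then have np: "real n > 0" using D0 t by linarith
      have f: "t \<le> real n" "t \<le> dist x0 (\<gamma> (real n))" using n np t LS[of n] D0 by linarith+
      have "dist (S n t) (\<gamma> t) \<le> D + t * D / real n"
        unfolding D_def by (rule ray_seg_close[OF cat r gS np t f])
      also have "t * D / real n \<le> D"
      proof -
        have "t * D \<le> real n * D" using n D0 t by (intro mult_right_mono) auto
        then show ?thesis using np by (simp add: divide_le_eq mult.commute)
      qed
      finally show "dist (S n t) (\<gamma> t) \<le> 2 * D" by simp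
    qed
    then show ?thesis using lim_dist_le[OF lim[OF t] tendsto_const] by simp
  qed
  show ?thesis using ray r0 bd unfolding D_def by blast
qed

lemma frac_mono: "0 \<le> (a::real) \<Longrightarrow> 0 < m \<Longrightarrow> m \<le> L \<Longrightarrow> a / L \<le> a / m"
  by (intro divide_left_mono) auto

lemma seg_near:
  fixes x0 x w :: "'a::metric_space"
  assumes cat: "CAT0 TYPE('a)" and g: "geoseg \<sigma> x0 w" and g': "geoseg \<sigma>' x w"
    and T: "0 \<le> T" "T \<le> dist x w" and L: "dist x w > 0"
  shows "dist (\<sigma> (T * dist x0 w / dist x w)) (\<sigma>' T) \<le> dist x0 x"
proof -
  have r1: "geoseg (\<lambda>s. \<sigma> (dist x0 w - s)) w x0" by (rule geoseg_rev[OF g])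
  have r2: "geoseg (\<lambda>s. \<sigma>' (dist x w - s)) w x" by (rule geoseg_rev[OF g'])
  define l where "l = (dist x w - T) / dist x w"
  have l: "0 \<le> l" "l \<le> 1" unfolding l_def using T L by auto
  have "dist ((\<lambda>s. \<sigma> (dist x0 w - s)) (l * dist w x0)) ((\<lambda>s. \<sigma>' (dist x w - s)) (l * dist w x)) \<le> l * dist x0 x"
    by (rule cat0_F1[OF cat r1 r2 l])
  moreover have "dist x0 w - l * dist w x0 = T * dist x0 w / dist x w"
    unfolding l_def using L by (simp add: dist_commute field_simps)
  moreover have "dist x w - l * dist w x = T"
    unfolding l_def using L by (simp add: dist_commute field_simps)
  moreover have "l * dist x0 x \<le> dist x0 x" using l by (simp add: mult_left_le_one_le)
  ultimately show ?thesis by simp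
qed

lemma basechange:
  fixes x x0 :: "'a::metric_space" and p p' :: "nat \<Rightarrow> 'a"
  assumes cat: "CAT0 TYPE('a)" and r: "geo_ray \<rho>" "\<rho> 0 = x" and b: "geo_ray \<beta>" "\<beta> 0 = x0"
    and C: "\<And>t. t \<ge> 0 \<Longrightarrow> dist (\<rho> t) (\<beta> t) \<le> C"
    and conv: "\<And>t. t \<ge> 0 \<Longrightarrow> (\<lambda>n. seg x (p n) t) \<longlonglongrightarrow> \<rho> t"
    and dv: "filterlim (\<lambda>n. dist x (p n)) at_top sequentially"
    and pert: "\<And>n. dist (p n) (p' n) \<le> Dp"
    and t: "t \<ge> 0"
  shows "(\<lambda>n. seg x0 (p' n) t) \<longlonglongrightarrow> \<beta> t"
proof -
  have geod: "geodesic_sp TYPE('a)" using CAT0_geodesic[OF cat] .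
  note sg = seg_geoseg[OF geod]
  define D0 where "D0 = dist x0 x"
  have D0: "D0 \<ge> 0" unfolding D0_def by simp
  have C0: "C \<ge> 0" using C[of 0] by (smt (verit) zero_le_dist)
  have Dp0: "Dp \<ge> 0" using pert[of 0] by (smt (verit) zero_le_dist)
  show ?thesis unfolding tendsto_iff
  proof (intro allI impI)
    fix e :: real assume e: "e > 0"
    define K where "K = 2 * t * (D0 + 1 + C)"
    have K0: "K \<ge> 0" unfolding K_def using t D0 C0 by simp
    define T where "T = t + D0 + 1 + 4 * K / e"
    have Ke: "4 * K / e \<ge> 0" using K0 e by simp
    have TD: "T - D0 > 0" "t \<le> T - D0" "T > 0" "t \<le> T" using Ke t D0 unfolding T_def by linarith+
    have eTK: "K / (T - D0) < e / 4"
    proof -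
      have "4 * K < e * (T - D0)"
      proof -
        have "4 * K = e * (4 * K / e)" using e by simp
        also have "\<dots> < e * (T - D0)" using e unfolding T_def by (intro mult_strict_left_mono) (use t in auto)
        finally show ?thesis .
      qed
      then show ?thesis using TD by (simp add: divide_less_eq mult.commute)
    qed
    define R where "R = T + D0 + Dp + 1 + 8 * t * Dp / e"
    have E1: "eventually (\<lambda>n. dist x (p n) \<ge> R) sequentially"
      using dv unfolding filterlim_at_top by blast
    have E2: "eventually (\<lambda>n. dist (seg x (p n) T) (\<rho> T) < 1) sequentially"
      using conv[of T] TD unfolding tendsto_iff by auto
    show "eventually (\<lambda>n. dist (seg x0 (p' n) t) (\<beta> t) < e) sequentially"
      using E1 E2
    proof eventually_elim
      case (elim n)
      define L where "L = dist x (p n)"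
      define L0 where "L0 = dist x0 (p n)"
      have tDe: "8 * t * Dp / e \<ge> 0" using t Dp0 e by simp
      have LR: "L \<ge> R" using elim L_def by simp
      have L0L: "L0 \<ge> L - D0" unfolding L0_def L_def D0_def by (smt (verit) dist_triangle dist_commute)
      have L0pos: "L0 > 0" using LR L0L tDe Dp0 D0 TD unfolding R_def by linarith
      have p'd: "dist x0 (p' n) \<ge> L0 - Dp" unfolding L0_def using pert[of n] dist_triangle[of x0 "p n" "p' n"] dist_commute[of "p n" "p' n"] by linarith
      have tL0: "t \<le> L0" "t \<le> dist x0 (p' n)" using LR L0L p'd tDe Dp0 D0 TD unfolding R_def by linarith+
      have ab: "dist (seg x0 (p n) t) (seg x0 (p' n) t) \<le> 2 * t * Dp / L0"
        unfolding L0_def by (rule segclose[OF cat sg sg]) (use L0pos pert t tL0 L0_def in auto)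
      have ab2: "2 * t * Dp / L0 < e / 4"
      proof (cases "t * Dp = 0")
        case True then show ?thesis using e by auto
      next
        case False
        then have tD: "t * Dp > 0" using t Dp0 by (simp add: less_le)
        have "L0 > 8 * t * Dp / e" using LR L0L D0 TD Dp0 unfolding R_def by linarith
        then have "e * L0 > 8 * t * Dp" using e by (simp add: divide_less_eq mult.commute)
        then show ?thesis using L0pos by (simp add: divide_less_eq mult.commute)
      qed
      define u where "u = seg x (p n) T"
      have Lpos: "L > 0" "T \<le> L" using LR TD D0 Dp0 tDe unfolding R_def by linarith+
      have near: "dist (seg x0 (p n) (T * L0 / L)) u \<le> D0"
        unfolding u_def L_def L0_def D0_def
        by (rule seg_near[OF cat sg sg]) (use TD Lpos L_def in auto)
      have q0: "0 \<le> T * L0 / L" using TD L0pos Lpos by simp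
      have q1: "T * L0 / L \<le> L0"
      proof -
        have "T * L0 \<le> L * L0" using Lpos L0pos by (intro mult_right_mono) auto
        then show ?thesis using Lpos by (simp add: divide_le_eq mult.commute)
      qed
      have gq: "geoseg (seg x0 (p n)) x0 (seg x0 (p n) (T * L0 / L))"
        using geoseg_sub[OF sg q0] q1 unfolding L0_def by simp
      have dq: "dist x0 (seg x0 (p n) (T * L0 / L)) = T * L0 / L"
        using geoseg_dist0[OF sg q0] q1 unfolding L0_def by simp
      have dqT: "T * L0 / L \<ge> T - D0"
      proof -
        have "T * L0 / L \<ge> T * (L - D0) / L" using L0L Lpos TD by (intro divide_right_mono mult_left_mono) auto
        moreover have "T * (L - D0) / L = T - T * D0 / L" using Lpos by (simp add: field_simps)
        moreover have "T * D0 / L \<le> D0"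
        proof -
          have "T * D0 \<le> L * D0" using Lpos D0 by (intro mult_right_mono) auto
          then show ?thesis using Lpos by (simp add: divide_le_eq mult.commute)
        qed
        ultimately show ?thesis by linarith
      qed
      have du: "dist x0 u \<ge> T - D0"
      proof -
        have "dist x u = T" unfolding u_def using geoseg_dist0[OF sg, of T x "p n"] TD Lpos L_def by simp
        then show ?thesis unfolding D0_def by (smt (verit) dist_triangle dist_commute)
      qed
      have bc: "dist (seg x0 u t) (seg x0 (p n) t) \<le> 2 * t * D0 / dist x0 u"
        by (rule segclose[OF cat sg gq]) (use du TD near dqT dq t in \<open>auto simp: dist_commute\<close>)
      have bc2: "2 * t * D0 / dist x0 u \<le> 2 * t * D0 / (T - D0)"
        using du TD t D0 by (intro frac_mono) auto
      have drT: "dist x0 (\<rho> T) \<ge> T - D0"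
      proof -
        have "dist x (\<rho> T) = T" using ray_dist0[OF r(1), of T] TD r(2) by simp
        then show ?thesis unfolding D0_def by (smt (verit) dist_triangle dist_commute)
      qed
      have cd: "dist (seg x0 (\<rho> T) t) (seg x0 u t) \<le> 2 * t * 1 / dist x0 (\<rho> T)"
        by (rule segclose[OF cat sg sg]) (use drT TD du elim u_def t in \<open>auto simp: dist_commute\<close>)
      have cd2: "2 * t * 1 / dist x0 (\<rho> T) \<le> 2 * t * 1 / (T - D0)"
        using drT TD t by (intro frac_mono) auto
      have de: "dist (\<beta> t) (seg x0 (\<rho> T) t) \<le> 2 * t * C / T"
        by (rule segray[OF cat b sg]) (use C[of T] TD drT t in \<open>auto simp: dist_commute\<close>)
      have de2: "2 * t * C / T \<le> 2 * t * C / (T - D0)"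
        using TD t C0 D0 by (intro frac_mono) auto
      have sum: "2 * t * D0 / (T - D0) + 2 * t * 1 / (T - D0) + 2 * t * C / (T - D0) = K / (T - D0)"
        unfolding K_def by (simp add: add_divide_distrib[symmetric] algebra_simps)
      have "dist (seg x0 (p' n) t) (\<beta> t) \<le> dist (seg x0 (p n) t) (seg x0 (p' n) t) + dist (seg x0 u t) (seg x0 (p n) t)
            + dist (seg x0 (\<rho> T) t) (seg x0 u t) + dist (\<beta> t) (seg x0 (\<rho> T) t)"
        by (smt (verit) dist_commute dist_triangle)
      also have "\<dots> < e / 4 + K / (T - D0)" using ab ab2 bc bc2 cd cd2 de de2 sum by linarith
      also have "\<dots> < e" using eTK e by linarith
      finally show ?case .
    qed
  qed
qed

lemma ray_extract:
  fixes x :: "'a::metric_space" and p :: "nat \<Rightarrow> 'a"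
  assumes cat: "CAT0 TYPE('a)" and pr: "proper_sp TYPE('a)"
    and dv: "filterlim (\<lambda>n. dist x (p n)) at_top sequentially"
  shows "\<exists>\<phi> \<rho>. strict_mono \<phi> \<and> geo_ray \<rho> \<and> \<rho> 0 = x \<and>
           (\<forall>t\<ge>0. (\<lambda>n. seg x (p (\<phi> n)) t) \<longlonglongrightarrow> \<rho> t)"
proof -
  have geod: "geodesic_sp TYPE('a)" using CAT0_geodesic[OF cat] .
  note sg = seg_geoseg[OF geod]
  define f where "f k n = seg x (p n) (min (real k) (dist x (p n)))" for k :: nat and n
  have fin: "f k n \<in> cball x (real k)" for k n
  proof -
    have "dist x (f k n) = min (real k) (dist x (p n))"
      unfolding f_def by (rule geoseg_dist0[OF sg]) auto
    then show ?thesis by simp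
  qed
  interpret S: subseqs "\<lambda>k s. convergent (\<lambda>n. f k (s n))"
  proof
    fix k :: nat and s :: "nat \<Rightarrow> nat" assume "strict_mono s"
    have "compact (cball x (real k))" using pr unfolding proper_sp_def by blast
    then have "seq_compact (cball x (real k))" by (rule compact_imp_seq_compact)
    moreover have "\<forall>n. (\<lambda>n. f k (s n)) n \<in> cball x (real k)" using fin by simp
    ultimately obtain l r where "strict_mono (r :: nat \<Rightarrow> nat)" "((\<lambda>n. f k (s n)) \<circ> r) \<longlonglongrightarrow> l"
      by (rule seq_compactE)
    then show "\<exists>r'. strict_mono r' \<and> convergent (\<lambda>n. f k ((s \<circ> r') n))"
      by (intro exI[of _ r]) (auto simp: convergent_def o_def)
  qed
  define \<phi> where "\<phi> = S.diagseq"
  have smono: "strict_mono \<phi>" unfolding \<phi>_def by (rule S.subseq_diagseq)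
  have ck: "convergent (\<lambda>n. f k (\<phi> n))" for k
  proof -
    have "convergent (\<lambda>n. f k ((S.diagseq \<circ> (+) (Suc k)) n))"
    proof (rule S.diagseq_holds)
      fix r s n assume "strict_mono (r :: nat \<Rightarrow> nat)" "convergent (\<lambda>m. f n (s m))"
      then show "convergent (\<lambda>m. f n ((s \<circ> r) m))"
        using convergent_subseq_convergent[of "\<lambda>m. f n (s m)" r] by (simp add: o_def)
    qed
    then obtain l where "(\<lambda>n. f k (S.diagseq (n + Suc k))) \<longlonglongrightarrow> l"
      unfolding convergent_def by (auto simp: o_def add.commute)
    then have "(\<lambda>n. f k (S.diagseq n)) \<longlonglongrightarrow> l" by (rule LIMSEQ_offset)
    then show ?thesis unfolding \<phi>_def convergent_def by blast
  qed
  have evk: "\<exists>N. \<forall>n\<ge>N. dist x (p (\<phi> n)) \<ge> Z" for Z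
  proof -
    obtain N where N: "\<And>n. n \<ge> N \<Longrightarrow> dist x (p n) \<ge> Z"
      using dv unfolding filterlim_at_top eventually_sequentially by blast
    show ?thesis
    proof (intro exI allI impI)
      fix n assume "N \<le> n"
      then show "dist x (p (\<phi> n)) \<ge> Z" using N seq_suble[OF smono, of n] by simp
    qed
  qed
  have conv: "convergent (\<lambda>n. seg x (p (\<phi> n)) t)" if t: "t \<ge> 0" for t
  proof -
    define k where "k = nat \<lceil>t\<rceil> + 1"
    have kt: "real k \<ge> t" "real k > 0" unfolding k_def using t by linarith+
    have "Cauchy (\<lambda>n. seg x (p (\<phi> n)) t)"
      unfolding Cauchy_def
    proof (intro allI impI)
      fix e :: real assume e: "e > 0"
      obtain M1 where M1: "\<And>m n. m \<ge> M1 \<Longrightarrow> n \<ge> M1 \<Longrightarrow> dist (f k (\<phi> m)) (f k (\<phi> n)) < e"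
        using convergent_Cauchy[OF ck[of k]] e unfolding Cauchy_def by meson
      obtain M2 where M2: "\<And>n. n \<ge> M2 \<Longrightarrow> dist x (p (\<phi> n)) \<ge> real k" using evk by blast
      show "\<exists>M. \<forall>m\<ge>M. \<forall>n\<ge>M. dist (seg x (p (\<phi> m)) t) (seg x (p (\<phi> n)) t) < e"
      proof (intro exI allI impI)
        fix m n assume mn: "max M1 M2 \<le> m" "max M1 M2 \<le> n"
        have km: "real k \<le> dist x (p (\<phi> m))" and kn: "real k \<le> dist x (p (\<phi> n))" using M2 mn by auto
        have fm: "f k (\<phi> m) = seg x (p (\<phi> m)) (real k)" unfolding f_def using km by simp
        have fn: "f k (\<phi> n) = seg x (p (\<phi> n)) (real k)" unfolding f_def using kn by simp
        have g1: "geoseg (seg x (p (\<phi> m))) x (seg x (p (\<phi> m)) (real k))" using geoseg_sub[OF sg, of "real k"] km by simp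
        have g2: "geoseg (seg x (p (\<phi> n))) x (seg x (p (\<phi> n)) (real k))" using geoseg_sub[OF sg, of "real k"] kn by simp
        have d1: "dist x (seg x (p (\<phi> m)) (real k)) = real k" using geoseg_dist0[OF sg, of "real k"] km by simp
        have d2: "dist x (seg x (p (\<phi> n)) (real k)) = real k" using geoseg_dist0[OF sg, of "real k"] kn by simp
        have l: "0 \<le> t / real k" "t / real k \<le> 1" using kt t by auto
        have "dist (seg x (p (\<phi> m)) ((t / real k) * real k)) (seg x (p (\<phi> n)) ((t / real k) * real k))
              \<le> (t / real k) * dist (seg x (p (\<phi> m)) (real k)) (seg x (p (\<phi> n)) (real k))"
          using cat0_F1[OF cat g1 g2 l] d1 d2 by simp
        also have "\<dots> \<le> dist (seg x (p (\<phi> m)) (real k)) (seg x (p (\<phi> n)) (real k))"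
          using l by (intro mult_left_le_one_le) auto
        also have "\<dots> < e" using M1[of m n] mn fm fn by simp
        finally show "dist (seg x (p (\<phi> m)) t) (seg x (p (\<phi> n)) t) < e" using kt by simp
      qed
    qed
    then show ?thesis using proper_cauchy[OF pr] unfolding convergent_def by blast
  qed
  define \<rho> where "\<rho> t = lim (\<lambda>n. seg x (p (\<phi> n)) t)" for t
  have lim: "(\<lambda>n. seg x (p (\<phi> n)) t) \<longlonglongrightarrow> \<rho> t" if "t \<ge> 0" for t
    unfolding \<rho>_def using conv[OF that] by (simp add: convergent_LIMSEQ_iff)
  have r0: "\<rho> 0 = x"
  proof -
    have "(\<lambda>n. seg x (p (\<phi> n)) 0) \<longlonglongrightarrow> x" using geoseg_0[OF sg] by simp
    then show ?thesis using lim[of 0] LIMSEQ_unique by auto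
  qed
  have ray: "geo_ray \<rho>" unfolding geo_ray_def
  proof (intro allI impI)
    fix s t :: real assume st: "s \<ge> 0" "t \<ge> 0"
    obtain N where N: "\<And>n. n \<ge> N \<Longrightarrow> dist x (p (\<phi> n)) \<ge> s + t" using evk by blast
    have "eventually (\<lambda>n. dist (seg x (p (\<phi> n)) s) (seg x (p (\<phi> n)) t) = \<bar>s - t\<bar>) sequentially"
      unfolding eventually_sequentially
    proof (intro exI allI impI)
      fix n assume "N \<le> n"
      then show "dist (seg x (p (\<phi> n)) s) (seg x (p (\<phi> n)) t) = \<bar>s - t\<bar>"
        using N[of n] st by (intro geoseg_dist[OF sg]) auto
    qed
    then show "dist (\<rho> s) (\<rho> t) = \<bar>s - t\<bar>" using lim_dist_eq[OF lim lim] st by simp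
  qed
  show ?thesis using smono ray r0 lim by blast
qed

lemma closest_point:
  fixes a b xo :: "'a::metric_space"
  assumes g: "geoseg \<gamma> a b"
  shows "\<exists>s0\<in>{0..dist a b}. \<forall>s\<in>{0..dist a b}. dist xo (\<gamma> s0) \<le> dist xo (\<gamma> s)"
proof -
  have "continuous_on {0..dist a b} (\<lambda>s. dist xo (\<gamma> s))"
    by (intro continuous_on_dist continuous_on_const geoseg_cont[OF g])
  then show ?thesis by (intro continuous_attains_inf) auto
qed

lemma sqrt2_lt: "sqrt 2 < (3/2::real)"
proof -
  have "sqrt 2 < sqrt ((3/2::real)^2)" by (rule real_sqrt_less_mono) (simp add: power2_eq_square)
  then show ?thesis by simp
qed

lemma line_contra:
  fixes lc a b :: "real \<Rightarrow> 'a::metric_space"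
  assumes l: "geo_line lc" and h1: "\<And>t. t \<ge> 0 \<Longrightarrow> dist (lc t) (a t) \<le> C1"
    and h2: "\<And>t. t \<ge> 0 \<Longrightarrow> dist (a t) (b t) \<le> sqrt 2 * t"
    and h3: "\<And>t. t \<ge> 0 \<Longrightarrow> dist (b t) (lc (-t)) \<le> C2"
  shows False
proof -
  define A where "A = \<bar>C1\<bar> + \<bar>C2\<bar> + 1"
  have A: "C1 + C2 + 1 \<le> A" "A \<ge> 1" unfolding A_def by auto
  define t where "t = 4 * A"
  have t0: "t \<ge> 0" unfolding t_def using A by simp
  have "dist (lc t) (lc (-t)) = 2 * t" using l t0 unfolding geo_line_def by simp
  moreover have "dist (lc t) (lc (-t)) \<le> dist (lc t) (a t) + dist (a t) (b t) + dist (b t) (lc (-t))"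
    by (smt (verit) dist_triangle)
  ultimately have "2 * t \<le> C1 + sqrt 2 * t + C2" using h1[OF t0] h2[OF t0] h3[OF t0] by linarith
  moreover have "sqrt 2 * t \<le> 3/2 * t" using sqrt2_lt t0 by (intro mult_right_mono) auto
  ultimately show False using A t_def by linarith
qed

lemma ray_class_self: "geo_ray \<alpha> \<Longrightarrow> \<alpha> \<in> ray_class \<alpha>"
  unfolding ray_class_def asymp_def by (auto intro: exI[of _ 0])

lemma keyK:
  fixes c :: "real \<Rightarrow> 'a::metric_space" and z :: "nat \<Rightarrow> 'a"
  assumes cat: "CAT0 TYPE('a)" and pr: "proper_sp TYPE('a)" and line: "geo_line c"
    and vis: "\<And>\<alpha>. geo_ray \<alpha> \<Longrightarrow> ray_class \<alpha> \<noteq> ray_class c \<Longrightarrow>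
          \<exists>lc. geo_line lc \<and> ray_class lc = ray_class c \<and> ray_class (\<lambda>t. lc (-t)) = ray_class \<alpha>"
    and b: "geo_ray \<beta>" "\<beta> 0 = c 0" and Cb: "\<And>t. t \<ge> 0 \<Longrightarrow> dist (\<beta> t) (c (-t)) \<le> C\<beta>"
    and zconv: "\<And>t. t \<ge> 0 \<Longrightarrow> (\<lambda>n. seg (c 0) (z n) t) \<longlonglongrightarrow> \<beta> t"
  shows "\<exists>R N. \<forall>n\<ge>N. \<forall>T\<ge>0. \<forall>\<gamma>. geoseg \<gamma> (z n) (c T) \<longrightarrow>
            (\<exists>s\<in>{0..dist (z n) (c T)}. dist (\<gamma> s) (c 0) \<le> R)"
proof (rule ccontr)
  assume neg: "\<not> ?thesis"
  have geod: "geodesic_sp TYPE('a)" using CAT0_geodesic[OF cat] .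
  note sg = seg_geoseg[OF geod]
  define xo where "xo = c 0"
  have "\<forall>k::nat. \<exists>w. fst w \<ge> k \<and> fst (snd w) \<ge> 0 \<and> geoseg (snd (snd w)) (z (fst w)) (c (fst (snd w))) \<and>
          (\<forall>s\<in>{0..dist (z (fst w)) (c (fst (snd w)))}. dist (snd (snd w) s) (c 0) > real k)"
  proof
    fix k :: nat
    have H: "\<forall>R N. \<exists>n\<ge>N. \<exists>T\<ge>0. \<exists>\<gamma>. geoseg \<gamma> (z n) (c T) \<and> (\<forall>s\<in>{0..dist (z n) (c T)}. dist (\<gamma> s) (c 0) > R)"
      using neg by (simp add: not_le)
    have "\<exists>n\<ge>k. \<exists>T\<ge>0. \<exists>\<gamma>. geoseg \<gamma> (z n) (c T) \<and> (\<forall>s\<in>{0..dist (z n) (c T)}. dist (\<gamma> s) (c 0) > real k)"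
      using H by blast
    then obtain n T \<gamma> where "n \<ge> k" "T \<ge> 0" "geoseg \<gamma> (z n) (c T)"
      "\<forall>s\<in>{0..dist (z n) (c T)}. dist (\<gamma> s) (c 0) > real k"
      by blast
    then show "\<exists>w. fst w \<ge> k \<and> fst (snd w) \<ge> 0 \<and> geoseg (snd (snd w)) (z (fst w)) (c (fst (snd w))) \<and>
          (\<forall>s\<in>{0..dist (z (fst w)) (c (fst (snd w)))}. dist (snd (snd w) s) (c 0) > real k)"
      by (intro exI[of _ "(n, T, \<gamma>)"]) auto
  qed
  then have "\<exists>W. \<forall>k. fst (W k) \<ge> k \<and> fst (snd (W k)) \<ge> 0 \<and>
          geoseg (snd (snd (W k))) (z (fst (W k))) (c (fst (snd (W k)))) \<and>
          (\<forall>s\<in>{0..dist (z (fst (W k))) (c (fst (snd (W k))))}. dist (snd (snd (W k)) s) (c 0) > real k)"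
    by (rule choice)
  then obtain W where W0: "\<forall>k. fst (W k) \<ge> k \<and> fst (snd (W k)) \<ge> 0 \<and>
          geoseg (snd (snd (W k))) (z (fst (W k))) (c (fst (snd (W k)))) \<and>
          (\<forall>s\<in>{0..dist (z (fst (W k))) (c (fst (snd (W k))))}. dist (snd (snd (W k)) s) (c 0) > real k)"
    by blast
  note W = W0[rule_format]
  define nn where "nn k = fst (W k)" for k
  define TT where "TT k = fst (snd (W k))" for k
  define gg where "gg k = snd (snd (W k))" for k
  have nn: "nn k \<ge> k" and TT: "TT k \<ge> 0" and gg: "geoseg (gg k) (z (nn k)) (c (TT k))"
    and far: "\<And>s. s \<in> {0..dist (z (nn k)) (c (TT k))} \<Longrightarrow> dist (gg k s) xo > real k" for k
    using W[of k] unfolding nn_def TT_def gg_def xo_def by auto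
  have "\<forall>k. \<exists>s0. s0 \<in> {0..dist (z (nn k)) (c (TT k))} \<and> (\<forall>s\<in>{0..dist (z (nn k)) (c (TT k))}. dist xo (gg k s0) \<le> dist xo (gg k s))"
    using closest_point[OF gg] by blast
  then have "\<exists>S. \<forall>k. S k \<in> {0..dist (z (nn k)) (c (TT k))} \<and> (\<forall>s\<in>{0..dist (z (nn k)) (c (TT k))}. dist xo (gg k (S k)) \<le> dist xo (gg k s))"
    by (rule choice)
  then obtain S where S0: "\<forall>k. S k \<in> {0..dist (z (nn k)) (c (TT k))} \<and> (\<forall>s\<in>{0..dist (z (nn k)) (c (TT k))}. dist xo (gg k (S k)) \<le> dist xo (gg k s))"
    by blast
  have S: "\<And>k. S k \<in> {0..dist (z (nn k)) (c (TT k))}" using S0 by blast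
  have Smin: "\<And>k s. s \<in> {0..dist (z (nn k)) (c (TT k))} \<Longrightarrow> dist xo (gg k (S k)) \<le> dist xo (gg k s)"
    using S0 by blast
  define P where "P k = gg k (S k)" for k
  have Pfar: "dist xo (P k) > real k" for k unfolding P_def using far[OF S] by (simp add: dist_commute)
  have cT: "geoseg c xo (c (TT k))" for k unfolding xo_def using ray_geoseg[OF line_ray[OF line] TT] .
  have dcT: "dist xo (c (TT k)) = TT k" for k unfolding xo_def using ray_dist0[OF line_ray[OF line] TT] .
  have proj1: "(dist xo (P k))^2 + (dist (P k) (c (TT k)))^2 \<le> (dist xo (c (TT k)))^2" for k
  proof -
    have Sk: "0 \<le> S k" "S k \<le> dist (z (nn k)) (c (TT k))" using S[of k] by auto
    have g3: "geoseg (\<lambda>\<tau>. gg k (S k + \<tau>)) (P k) (c (TT k))" unfolding P_def by (rule geoseg_shift[OF gg Sk])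
    have dd: "dist (P k) (c (TT k)) = dist (z (nn k)) (c (TT k)) - S k"
      unfolding P_def by (rule geoseg_dist1[OF gg Sk])
    show ?thesis
    proof (rule cat0_proj[OF cat sg g3])
      fix \<tau> assume "0 \<le> \<tau>" "\<tau> \<le> dist (P k) (c (TT k))"
      then show "dist xo (P k) \<le> dist xo (gg k (S k + \<tau>))"
        using Smin[of "S k + \<tau>" k] Sk dd unfolding P_def by auto
    qed
  qed
  have proj2: "(dist xo (P k))^2 + (dist (P k) (z (nn k)))^2 \<le> (dist xo (z (nn k)))^2" for k
  proof -
    have Sk: "0 \<le> S k" "S k \<le> dist (z (nn k)) (c (TT k))" using S[of k] by auto
    have gsub: "geoseg (gg k) (z (nn k)) (P k)" unfolding P_def by (rule geoseg_sub[OF gg Sk])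
    have dz: "dist (z (nn k)) (P k) = S k" unfolding P_def by (rule geoseg_dist0[OF gg Sk])
    have g3: "geoseg (\<lambda>\<tau>. gg k (S k - \<tau>)) (P k) (z (nn k))"
      using geoseg_rev[OF gsub] dz by simp
    show ?thesis
    proof (rule cat0_proj[OF cat sg g3])
      fix \<tau> assume "0 \<le> \<tau>" "\<tau> \<le> dist (P k) (z (nn k))"
      then show "dist xo (P k) \<le> dist xo (gg k (S k - \<tau>))"
        using Smin[of "S k - \<tau>" k] Sk dz unfolding P_def by (auto simp: dist_commute)
    qed
  qed
  have cmp1: "dist (seg xo (P k) t) (c t) \<le> sqrt 2 * t" if "0 \<le> t" "t \<le> dist xo (P k)" for k t
    using cat0_right[OF cat sg cT proj1 that] .
  have cmp2: "dist (seg xo (P k) t) (seg xo (z (nn k)) t) \<le> sqrt 2 * t" if "0 \<le> t" "t \<le> dist xo (P k)" for k t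
    using cat0_right[OF cat sg sg proj2 that] .
  have dvP: "filterlim (\<lambda>k. dist xo (P k)) at_top sequentially"
  proof (rule filterlim_at_top_mono[OF filterlim_real_sequentially])
    show "eventually (\<lambda>k. real k \<le> dist xo (P k)) sequentially"
      by (intro always_eventually allI) (simp add: Pfar less_imp_le)
  qed
  obtain \<phi> \<alpha> where \<phi>: "strict_mono \<phi>" and a: "geo_ray \<alpha>" "\<alpha> 0 = xo"
    and aconv: "\<And>t. t \<ge> 0 \<Longrightarrow> (\<lambda>j. seg xo (P (\<phi> j)) t) \<longlonglongrightarrow> \<alpha> t"
    using ray_extract[OF cat pr dvP] by blast
  have nphi: "filterlim (\<lambda>j. nn (\<phi> j)) at_top sequentially"
    unfolding filterlim_at_top eventually_sequentially
  proof (intro allI exI impI)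
    fix Z j :: nat assume "Z \<le> j"
    then show "Z \<le> nn (\<phi> j)" using nn[of "\<phi> j"] seq_suble[OF \<phi>, of j] by linarith
  qed
  have evP: "eventually (\<lambda>j. t \<le> dist xo (P (\<phi> j))) sequentially" for t :: real
  proof -
    obtain N :: nat where "real N \<ge> t" using real_arch_simple by blast
    then show ?thesis unfolding eventually_sequentially
    proof (intro exI allI impI)
      fix j assume "N \<le> j"
      then have "real N \<le> real (\<phi> j)" using seq_suble[OF \<phi>, of j] by simp
      then show "t \<le> dist xo (P (\<phi> j))" using Pfar[of "\<phi> j"] \<open>real N \<ge> t\<close> by linarith
    qed
  qed
  have ac: "dist (\<alpha> t) (c t) \<le> sqrt 2 * t" if t: "t \<ge> 0" for t
  proof (rule lim_dist_le[OF aconv[OF t] tendsto_const])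
    show "eventually (\<lambda>j. dist (seg xo (P (\<phi> j)) t) (c t) \<le> sqrt 2 * t) sequentially"
      using evP[of t] by eventually_elim (use cmp1 t in auto)
  qed
  have ab: "dist (\<alpha> t) (\<beta> t) \<le> sqrt 2 * t" if t: "t \<ge> 0" for t
  proof (rule lim_dist_le[OF aconv[OF t]])
    show "(\<lambda>j. seg xo (z (nn (\<phi> j))) t) \<longlonglongrightarrow> \<beta> t"
      using filterlim_compose[OF zconv[OF t] nphi] unfolding xo_def by simp
    show "eventually (\<lambda>j. dist (seg xo (P (\<phi> j)) t) (seg xo (z (nn (\<phi> j))) t) \<le> sqrt 2 * t) sequentially"
      using evP[of t] by eventually_elim (use cmp2 t in auto)
  qed
  show False
  proof (cases "ray_class \<alpha> = ray_class c")
    case True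
    then have "\<alpha> \<in> ray_class c" using ray_class_self[OF a(1)] by simp
    then obtain C1 where C1: "\<And>t. t \<ge> 0 \<Longrightarrow> dist (c t) (\<alpha> t) \<le> C1"
      unfolding ray_class_def asymp_def by auto
    show False
      by (rule line_contra[OF line C1 ab Cb])
  next
    case False
    obtain lc where l: "geo_line lc" "ray_class lc = ray_class c" "ray_class (\<lambda>t. lc (-t)) = ray_class \<alpha>"
      using vis[OF a(1) False] by blast
    have "c \<in> ray_class lc" using ray_class_self[OF line_ray[OF line]] l(2) by simp
    then obtain C1 where C1: "\<And>t. t \<ge> 0 \<Longrightarrow> dist (lc t) (c t) \<le> C1"
      unfolding ray_class_def asymp_def by auto
    have "\<alpha> \<in> ray_class (\<lambda>t. lc (-t))" using ray_class_self[OF a(1)] l(3) by simp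
    then obtain C2 where C2: "\<And>t. t \<ge> 0 \<Longrightarrow> dist (lc (-t)) (\<alpha> t) \<le> C2"
      unfolding ray_class_def asymp_def by auto
    have h2: "dist (\<alpha> t) (lc (-t)) \<le> C2" if "t \<ge> 0" for t using C2[OF that] by (simp add: dist_commute)
    have h1: "dist (c t) (\<alpha> t) \<le> sqrt 2 * t" if "t \<ge> 0" for t using ac[OF that] by (simp add: dist_commute)
    show False by (rule line_contra[OF l(1) C1 h1 h2])
  qed
qed

lemma asymp_bound: "(\<And>t. t \<ge> 0 \<Longrightarrow> dist (a t) (b t) \<le> C) \<Longrightarrow> asymp a b"
  unfolding asymp_def by blast

lemma asymp_sym: "asymp a b \<Longrightarrow> asymp b a"
  unfolding asymp_def by (auto simp: dist_commute)

lemma asymp_trans: "asymp a b \<Longrightarrow> asymp b c \<Longrightarrow> asymp a c"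
  unfolding asymp_def
proof (elim exE)
  fix C1 C2 assume h1: "\<forall>t\<ge>0. dist (a t) (b t) \<le> C1" and h2: "\<forall>t\<ge>0. dist (b t) (c t) \<le> C2"
  show "\<exists>C. \<forall>t\<ge>0. dist (a t) (c t) \<le> C"
  proof (intro exI allI impI)
    fix t :: real assume "t \<ge> 0"
    then show "dist (a t) (c t) \<le> C1 + C2" using h1 h2 dist_triangle[of "a t" "c t" "b t"] by force
  qed
qed

lemma asymp_img: "(\<And>a b. dist (f a) (f b) = dist a b) \<Longrightarrow> asymp a b \<Longrightarrow> asymp (f \<circ> a) (f \<circ> b)"
  unfolding asymp_def by simp

lemma ray_img: "(\<And>a b. dist (f a) (f b) = dist a b) \<Longrightarrow> geo_ray a \<Longrightarrow> geo_ray (f \<circ> a)"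
  unfolding geo_ray_def by simp

lemma ray_class_asymp: "b \<in> ray_class a \<Longrightarrow> asymp a b"
  unfolding ray_class_def by simp

lemma bd_act_eq:
  assumes iso: "\<And>a b. dist (f a) (f b) = dist a b" and c: "geo_ray c" and as: "asymp (f \<circ> c) \<rho>"
  shows "bd_act f (ray_class c) = ray_class \<rho>"
proof
  show "bd_act f (ray_class c) \<subseteq> ray_class \<rho>"
  proof
    fix c' assume "c' \<in> bd_act f (ray_class c)"
    then obtain c1 where c': "geo_ray c'" and c1: "c1 \<in> ray_class c" and a1: "asymp (f \<circ> c1) c'"
      unfolding bd_act_def by blast
    have "asymp (f \<circ> c) (f \<circ> c1)" using asymp_img[OF iso ray_class_asymp[OF c1]] .
    then have "asymp \<rho> c'" using asymp_trans[OF asymp_sym[OF as]] asymp_trans a1 by blast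
    then show "c' \<in> ray_class \<rho>" unfolding ray_class_def using c' by simp
  qed
next
  show "ray_class \<rho> \<subseteq> bd_act f (ray_class c)"
  proof
    fix c' assume "c' \<in> ray_class \<rho>"
    then have c': "geo_ray c'" "asymp \<rho> c'" unfolding ray_class_def by auto
    have "asymp (f \<circ> c) c'" using asymp_trans[OF as c'(2)] .
    then show "c' \<in> bd_act f (ray_class c)" unfolding bd_act_def using c' ray_class_self[OF c] by blast
  qed
qed

lemma main_estimate:
  fixes x0 xc :: "'a::metric_space" and Gn Hn :: "nat \<Rightarrow> 'a \<Rightarrow> 'a" and c :: "real \<Rightarrow> 'a"
  assumes cat: "CAT0 TYPE('a)" and line: "geo_line c" and xc: "xc = c 0"
    and iso: "\<And>n a b. dist (Gn n a) (Gn n b) = dist a b"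
    and inv1: "\<And>n a. Gn n (Hn n a) = a" and inv2: "\<And>n a. Hn n (Gn n a) = a"
    and K: "\<forall>n\<ge>N. \<forall>T\<ge>0. \<forall>\<gamma>. geoseg \<gamma> (Hn n x0) (c T) \<longrightarrow> (\<exists>s\<in>{0..dist (Hn n x0) (c T)}. dist (\<gamma> s) xc \<le> R)"
    and rn: "\<And>n. geo_ray (\<rho>n n)" "\<And>n. \<rho>n n 0 = x0"
    and rnC: "\<And>n t. t \<ge> 0 \<Longrightarrow> dist (\<rho>n n t) (Gn n (c t)) \<le> Cn n"
    and Pconv: "(\<lambda>n. seg x0 (Gn n xc) r) \<longlonglongrightarrow> \<rho>p r"
    and Pdv: "filterlim (\<lambda>n. dist x0 (Gn n xc)) at_top sequentially"
    and r: "r > 0"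
  shows "(\<lambda>n. \<rho>n n r) \<longlonglongrightarrow> \<rho>p r"
proof -
  have geod: "geodesic_sp TYPE('a)" using CAT0_geodesic[OF cat] .
  note sg = seg_geoseg[OF geod]
  have Hiso: "dist (Hn n a) (Hn n b) = dist a b" for n a b
    using iso[of n "Hn n a" "Hn n b"] by (simp add: inv1)
  show ?thesis unfolding tendsto_iff
  proof (intro allI impI)
    fix e :: real assume e: "e > 0"
    define B where "B = \<bar>R\<bar> + r + 8 * r * \<bar>R\<bar> / e + 1"
    have rRe: "8 * r * \<bar>R\<bar> / e \<ge> 0" using r e by simp
    have "e / 4 > 0" using e by simp
    have E1: "eventually (\<lambda>n. dist x0 (Gn n xc) \<ge> B) sequentially"
      using Pdv unfolding filterlim_at_top by blast
    have E2: "eventually (\<lambda>n. dist (seg x0 (Gn n xc) r) (\<rho>p r) < e / 4) sequentially"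
      using Pconv \<open>e / 4 > 0\<close> unfolding tendsto_iff by blast
    have E3: "eventually (\<lambda>n. n \<ge> N) sequentially" by (rule eventually_ge_at_top)
    show "eventually (\<lambda>n. dist (\<rho>n n r) (\<rho>p r) < e) sequentially"
      using E1 E2 E3
    proof eventually_elim
      case (elim n)
      define P where "P = Gn n xc"
      define D where "D = dist x0 (Gn n (c 0))"
      have Cn0: "Cn n \<ge> 0" using rnC[of 0 n] zero_le_dist[of "\<rho>n n 0" "Gn n (c 0)"] by linarith
      have LP: "dist x0 P \<ge> B" using elim P_def by simp
      obtain m :: nat where m: "real m > r + D + 4 * r * Cn n / e * 2 + 1" using reals_Archimedean2 by blast
      have rCe: "4 * r * Cn n / e * 2 \<ge> 0" using r Cn0 e by simp
      have D0: "D \<ge> 0" unfolding D_def by simp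
      have mpos: "real m > 0" "r \<le> real m" using m r D0 rCe by linarith+
      define w where "w = Gn n (c (real m))"
      define \<gamma> where "\<gamma> = seg x0 w"
      have g: "geoseg \<gamma> x0 w" unfolding \<gamma>_def by (rule sg)
      have dw: "dist x0 w \<ge> real m - D"
      proof -
        have "dist (Gn n (c 0)) w = real m" unfolding w_def iso
          using ray_dist0[OF line_ray[OF line], of "real m"] by simp
        then show ?thesis unfolding D_def using dist_triangle[of "Gn n (c 0)" w x0] dist_commute[of x0 "Gn n (c 0)"] by linarith
      qed
      have rw: "r \<le> dist x0 w" using dw m rCe r by linarith
      have gH: "geoseg (Hn n \<circ> \<gamma>) (Hn n x0) (c (real m))"
      proof -
        from geoseg_img[OF g Hiso[of n]] show ?thesis unfolding w_def inv2 .
      qed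
      have "\<exists>s\<in>{0..dist (Hn n x0) (c (real m))}. dist ((Hn n \<circ> \<gamma>) s) xc \<le> R"
        using K[rule_format, of n "real m" "Hn n \<circ> \<gamma>"] elim gH by simp
      then obtain s where s: "s \<in> {0..dist (Hn n x0) (c (real m))}" and sR: "dist ((Hn n \<circ> \<gamma>) s) xc \<le> R"
        by blast
      have R0: "R \<ge> 0" using sR zero_le_dist[of "(Hn n \<circ> \<gamma>) s" xc] by linarith
      then have aR: "\<bar>R\<bar> = R" by simp
      have dH: "dist (Hn n x0) (c (real m)) = dist x0 w"
        using iso[of n "Hn n x0" "c (real m)"] unfolding w_def inv1 by simp
      have s': "0 \<le> s" "s \<le> dist x0 w" using s dH by auto
      have near: "dist (\<gamma> s) P \<le> R"
      proof -
        have "dist (\<gamma> s) P = dist (Gn n (Hn n (\<gamma> s))) (Gn n xc)" unfolding P_def inv1 ..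
        also have "\<dots> = dist ((Hn n \<circ> \<gamma>) s) xc" by (simp add: iso)
        finally show ?thesis using sR by simp
      qed
      have ds: "dist x0 (\<gamma> s) = s" by (rule geoseg_dist0[OF g s'])
      have gs: "geoseg \<gamma> x0 (\<gamma> s)" by (rule geoseg_sub[OF g s'])
      have sP: "s \<ge> dist x0 P - R" using near ds dist_triangle[of x0 P "\<gamma> s"] dist_commute[of P "\<gamma> s"] by linarith
      have Ppos: "dist x0 P > 0" "r \<le> dist x0 P" "r \<le> dist x0 (\<gamma> s)" using LP sP ds rRe R0 r unfolding B_def aR by linarith+
      have a1: "dist (seg x0 P r) (\<gamma> r) \<le> 2 * r * R / dist x0 P"
        by (rule segclose[OF cat sg gs Ppos(1)]) (use near r Ppos in \<open>auto simp: dist_commute\<close>)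
      have a2: "2 * r * R / dist x0 P < e / 4"
      proof (cases "r * R = 0")
        case True then show ?thesis using e by auto
      next
        case False
        have "dist x0 P > 8 * r * R / e" using LP R0 r rRe unfolding B_def aR by linarith
        then have "e * dist x0 P > 8 * r * R" using e by (simp add: divide_less_eq mult.commute)
        then show ?thesis using Ppos by (simp add: divide_less_eq mult.commute)
      qed
      have b1: "dist (\<rho>n n r) (\<gamma> r) \<le> 2 * r * Cn n / real m"
      proof (rule segray[OF cat rn(1) rn(2) g])
        show "dist (\<rho>n n (real m)) w \<le> Cn n" unfolding w_def using rnC[of "real m" n] by simp
      qed (use mpos r rw in auto)
      have b2: "2 * r * Cn n / real m < e / 4"
      proof -
        have "real m > 8 * r * Cn n / e" using m rCe r D0 by simp
        then have "e * real m > 8 * r * Cn n" using e by (simp add: divide_less_eq mult.commute)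
        then show ?thesis using mpos by (simp add: divide_less_eq algebra_simps)
      qed
      have "dist (\<rho>n n r) (\<rho>p r) \<le> dist (\<rho>n n r) (\<gamma> r) + dist (\<gamma> r) (\<rho>p r)" by (rule dist_triangle)
      moreover have "dist (\<gamma> r) (\<rho>p r) \<le> dist (\<gamma> r) (seg x0 P r) + dist (seg x0 P r) (\<rho>p r)" by (rule dist_triangle)
      ultimately have "dist (\<rho>n n r) (\<rho>p r) \<le> dist (\<rho>n n r) (\<gamma> r) + dist (seg x0 P r) (\<gamma> r) + dist (seg x0 P r) (\<rho>p r)"
        by (simp add: dist_commute)
      also have "\<dots> < e" using a1 a2 b1 b2 elim(2) e unfolding P_def by linarith
      finally show ?case .
    qed
  qed
qed

lemma vis_limit:
  fixes x0 :: "'a::metric_space" and \<rho>p \<rho>p0 :: "real \<Rightarrow> 'a" and \<rho>n :: "nat \<Rightarrow> real \<Rightarrow> 'a"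
  assumes cat: "CAT0 TYPE('a)"
    and rp: "geo_ray \<rho>p" and rp0: "geo_ray \<rho>p0" "\<rho>p0 0 = x0" "asymp \<rho>p \<rho>p0"
    and fn: "\<And>n. f n = ray_class (\<rho>n n)" and rn: "\<And>n. geo_ray (\<rho>n n)" "\<And>n. \<rho>n n 0 = x0"
    and conv: "\<And>r. r > 0 \<Longrightarrow> (\<lambda>n. \<rho>n n r) \<longlonglongrightarrow> \<rho>p0 r"
  shows "limitin (visual_top x0) f (ray_class \<rho>p) sequentially"
proof -
  let ?S = "{vis_basic x0 \<xi> r \<epsilon> | \<xi> r \<epsilon>. \<xi> \<in> vis_boundary \<and> r > 0 \<and> \<epsilon> > 0}"
  have vb: "ray_class \<rho>p \<in> vis_boundary" unfolding vis_boundary_def using rp by blast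
  have p0in: "\<rho>p0 \<in> ray_class \<rho>p" unfolding ray_class_def using rp0 by simp
  have fvb: "f n \<in> vis_boundary" for n unfolding fn vis_boundary_def using rn by blast
  have rnin: "\<rho>n n \<in> f n" for n unfolding fn using ray_class_self[OF rn(1)] .
  have top: "ray_class \<rho>p \<in> topspace (visual_top x0)"
  proof -
    have "ray_class \<rho>p \<in> vis_basic x0 (ray_class \<rho>p) 1 1"
      unfolding vis_basic_def using vb p0in rp0 by force
    moreover have "vis_basic x0 (ray_class \<rho>p) 1 1 \<in> ?S" using vb by force
    ultimately show ?thesis unfolding visual_top_def by auto
  qed
  have main: "ray_class \<rho>p \<in> U \<longrightarrow> eventually (\<lambda>n. f n \<in> U) sequentially" if "generate_topology_on ?S U" for U
    using that
  proof (induction rule: generate_topology_on.induct)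
    case Empty then show ?case by simp
  next
    case (Int a b) then show ?case by (auto intro: eventually_conj)
  next
    case (UN K)
    show ?case
    proof
      assume "ray_class \<rho>p \<in> \<Union>K"
      then obtain k where k: "k \<in> K" "ray_class \<rho>p \<in> k" by blast
      then have "eventually (\<lambda>n. f n \<in> k) sequentially" using UN.IH by blast
      then show "eventually (\<lambda>n. f n \<in> \<Union>K) sequentially" by eventually_elim (use k in blast)
    qed
  next
    case (Basis s)
    then obtain \<zeta> r \<epsilon> where s: "s = vis_basic x0 \<zeta> r \<epsilon>" "\<zeta> \<in> vis_boundary" "r > 0" "\<epsilon> > 0" by blast
    show ?case
    proof
      assume "ray_class \<rho>p \<in> s"
      then obtain c1 c2 where c1: "c1 \<in> \<zeta>" "c1 0 = x0" and c2: "c2 \<in> ray_class \<rho>p" "c2 0 = x0"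
        and d: "dist (c1 r) (c2 r) < \<epsilon>"
        unfolding s vis_basic_def by blast
      have c2r: "geo_ray c2" using c2 unfolding ray_class_def by simp
      have "asymp c2 \<rho>p0" using asymp_trans[OF asymp_sym[OF ray_class_asymp[OF c2(1)]] rp0(3)] .
      then obtain C where C: "\<And>t. t \<ge> 0 \<Longrightarrow> dist (c2 t) (\<rho>p0 t) \<le> C" unfolding asymp_def by blast
      have eq: "c2 r = \<rho>p0 r" using ray_unique[OF cat c2r rp0(1) _ C] c2(2) rp0(2) s(3) by simp
      define \<delta> where "\<delta> = \<epsilon> - dist (c1 r) (\<rho>p0 r)"
      have \<delta>: "\<delta> > 0" unfolding \<delta>_def using d eq by simp
      have "eventually (\<lambda>n. dist (\<rho>n n r) (\<rho>p0 r) < \<delta>) sequentially"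
        using conv[OF s(3)] \<delta> unfolding tendsto_iff by blast
      then show "eventually (\<lambda>n. f n \<in> s) sequentially"
      proof eventually_elim
        case (elim n)
        have "dist (c1 r) (\<rho>n n r) < \<epsilon>"
          using elim dist_triangle[of "c1 r" "\<rho>n n r" "\<rho>p0 r"] unfolding \<delta>_def by (simp add: dist_commute)
        then show "f n \<in> s" unfolding s vis_basic_def using fvb c1 rnin rn(2) by blast
      qed
    qed
  qed
  show ?thesis unfolding limitin_def
  proof (intro conjI allI impI)
    show "ray_class \<rho>p \<in> topspace (visual_top x0)" by (rule top)
    fix U assume "openin (visual_top x0) U \<and> ray_class \<rho>p \<in> U"
    then show "eventually (\<lambda>n. f n \<in> U) sequentially"
      using main unfolding visual_top_def openin_topology_generated_by_iff by blast
  qed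
qed

theorem lemma2p8:
  fixes G :: "('g, 'b) monoid_scheme"
    and act :: "'g \<Rightarrow> 'a::metric_space \<Rightarrow> 'a"
    and g :: "nat \<Rightarrow> 'g"
  assumes "proper_sp TYPE('a)"
    and "CAT0 TYPE('a)"
    and "isom_action G act"
    and "\<And>n. g n \<in> carrier G"
    and "\<exists>x::'a. \<forall>K. compact K \<longrightarrow> (\<forall>\<^sub>F n in sequentially. act (g n) x \<notin> K)"
  shows "\<exists>\<sigma> \<xi>m \<xi>p. strict_mono \<sigma> \<and> \<xi>m \<in> vis_boundary \<and> \<xi>p \<in> vis_boundary \<and>
    (\<forall>\<xi> \<in> visibility_pts - {\<xi>m}. \<forall>x0::'a.
       limitin (visual_top x0) (\<lambda>n. bd_act (act (g (\<sigma> n))) \<xi>) \<xi>p sequentially)"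
proof -
  note pr = assms(1) and cat = assms(2)
  have geod: "geodesic_sp TYPE('a)" using CAT0_geodesic[OF cat] .
  note sg = seg_geoseg[OF geod]
  obtain x :: 'a where esc: "\<And>K. compact K \<Longrightarrow> (\<forall>\<^sub>F n in sequentially. act (g n) x \<notin> K)"
    using assms(5) by blast
  define F where "F n = act (g n)" for n
  have isoF: "isometry_of (F n)" for n using assms(3,4) unfolding isom_action_def F_def by blast
  have Fd: "dist (F n a) (F n b) = dist a b" for n a b using isoF unfolding isometry_of_def by blast
  have bijF: "bij (F n)" for n using isoF unfolding isometry_of_def by blast
  define H where "H n = inv_into UNIV (F n)" for n
  have FH: "F n (H n a) = a" for n a unfolding H_def using bijF[of n] by (simp add: bij_def surj_f_inv_f)
  have HF: "H n (F n a) = a" for n a unfolding H_def using bijF[of n] by (simp add: bij_def inv_f_f)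
  have Hd: "dist (H n a) (H n b) = dist a b" for n a b using Fd[of n "H n a" "H n b"] by (simp add: FH)
  define y where "y n = F n x" for n
  define z where "z n = H n x" for n
  have dvy: "filterlim (\<lambda>n. dist x (y n)) at_top sequentially"
    unfolding filterlim_at_top
  proof
    fix Z :: real
    have "compact (cball x Z)" using pr unfolding proper_sp_def by blast
    then have "eventually (\<lambda>n. act (g n) x \<notin> cball x Z) sequentially" by (rule esc)
    then show "eventually (\<lambda>n. Z \<le> dist x (y n)) sequentially"
      by eventually_elim (simp add: y_def F_def)
  qed
  have dzy: "dist x (z n) = dist x (y n)" for n
    unfolding z_def y_def using Fd[of n x "H n x"] by (simp add: FH dist_commute)
  have dvz: "filterlim (\<lambda>n. dist x (z n)) at_top sequentially" using dvy by (simp add: dzy)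
  obtain \<phi>1 \<rho>p where \<phi>1: "strict_mono \<phi>1" and rp: "geo_ray \<rho>p" "\<rho>p 0 = x"
    and yc: "\<And>t. t \<ge> 0 \<Longrightarrow> (\<lambda>n. seg x (y (\<phi>1 n)) t) \<longlonglongrightarrow> \<rho>p t"
    using ray_extract[OF cat pr dvy] by blast
  have dvz1: "filterlim (\<lambda>n. dist x (z (\<phi>1 n))) at_top sequentially"
    using filterlim_compose[OF dvz filterlim_subseq[OF \<phi>1]] .
  obtain \<phi>2 \<rho>m where \<phi>2: "strict_mono \<phi>2" and rm: "geo_ray \<rho>m" "\<rho>m 0 = x"
    and zc: "\<And>t. t \<ge> 0 \<Longrightarrow> (\<lambda>n. seg x (z (\<phi>1 (\<phi>2 n))) t) \<longlonglongrightarrow> \<rho>m t"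
    using ray_extract[OF cat pr dvz1] by blast
  define \<sigma> where "\<sigma> = \<phi>1 \<circ> \<phi>2"
  have smono: "strict_mono \<sigma>" unfolding \<sigma>_def using \<phi>1 \<phi>2 by (rule strict_mono_o)
  have ycs: "(\<lambda>n. seg x (y (\<sigma> n)) t) \<longlonglongrightarrow> \<rho>p t" if "t \<ge> 0" for t
    using LIMSEQ_subseq_LIMSEQ[OF yc[OF that] \<phi>2] unfolding \<sigma>_def by (simp add: o_def)
  have zcs: "(\<lambda>n. seg x (z (\<sigma> n)) t) \<longlonglongrightarrow> \<rho>m t" if "t \<ge> 0" for t
    using zc[OF that] unfolding \<sigma>_def by (simp add: o_def)
  have dvys: "filterlim (\<lambda>n. dist x (y (\<sigma> n))) at_top sequentially"
    using filterlim_compose[OF dvy filterlim_subseq[OF smono]] .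
  have dvzs: "filterlim (\<lambda>n. dist x (z (\<sigma> n))) at_top sequentially"
    using filterlim_compose[OF dvz filterlim_subseq[OF smono]] .
  have vbm: "ray_class \<rho>m \<in> vis_boundary" unfolding vis_boundary_def using rm by blast
  have vbp: "ray_class \<rho>p \<in> vis_boundary" unfolding vis_boundary_def using rp by blast
  have main: "limitin (visual_top x0) (\<lambda>n. bd_act (act (g (\<sigma> n))) \<xi>) (ray_class \<rho>p) sequentially"
    if \<xi>: "\<xi> \<in> visibility_pts - {ray_class \<rho>m}" for \<xi> and x0 :: 'a
  proof -
    have \<xi>v: "\<xi> \<in> vis_boundary" and \<xi>vis: "\<And>\<eta>. \<eta> \<in> vis_boundary \<Longrightarrow> \<eta> \<noteq> \<xi> \<Longrightarrow>
      \<exists>c. geo_line c \<and> ray_class c = \<xi> \<and> ray_class (\<lambda>t. c (- t)) = \<eta>"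
      using \<xi> unfolding visibility_pts_def by auto
    have "ray_class \<rho>m \<noteq> \<xi>" using \<xi> by auto
    then obtain c where line: "geo_line c" and c\<xi>: "ray_class c = \<xi>" and cm: "ray_class (\<lambda>t. c (- t)) = ray_class \<rho>m"
      using \<xi>vis[OF vbm] by blast
    define xc where "xc = c 0"
    define Gn where "Gn n = F (\<sigma> n)" for n
    define Hn where "Hn n = H (\<sigma> n)" for n
    have Gd: "dist (Gn n a) (Gn n b) = dist a b" for n a b unfolding Gn_def by (rule Fd)
    have GH: "Gn n (Hn n a) = a" for n a unfolding Gn_def Hn_def by (rule FH)
    have HG: "Hn n (Gn n a) = a" for n a unfolding Gn_def Hn_def by (rule HF)
    obtain \<beta> where b: "geo_ray \<beta>" "\<beta> 0 = xc" and bC: "\<And>t. t \<ge> 0 \<Longrightarrow> dist (\<beta> t) (\<rho>m t) \<le> 2 * dist xc (\<rho>m 0)"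
      using ray_exist[OF cat pr rm(1), of xc] by blast
    have zK: "(\<lambda>n. seg xc (Hn n x0) t) \<longlonglongrightarrow> \<beta> t" if "t \<ge> 0" for t
    proof (rule basechange[OF cat rm b _ zcs dvzs _ that])
      show "dist (\<rho>m s) (\<beta> s) \<le> 2 * dist xc (\<rho>m 0)" if "s \<ge> 0" for s using bC[OF that] by (simp add: dist_commute)
      show "dist (z (\<sigma> n)) (Hn n x0) \<le> dist x x0" for n unfolding z_def Hn_def by (simp add: Hd)
    qed
    have "\<rho>m \<in> ray_class (\<lambda>t. c (- t))" using ray_class_self[OF rm(1)] cm by simp
    then obtain C' where C': "\<And>t. t \<ge> 0 \<Longrightarrow> dist (c (- t)) (\<rho>m t) \<le> C'"
      unfolding ray_class_def asymp_def by auto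
    have Cb: "dist (\<beta> t) (c (- t)) \<le> 2 * dist xc (\<rho>m 0) + C'" if "t \<ge> 0" for t
      using bC[OF that] C'[OF that] dist_triangle[of "\<beta> t" "c (-t)" "\<rho>m t"] by (simp add: dist_commute)
    have vis: "\<exists>lc. geo_line lc \<and> ray_class lc = ray_class c \<and> ray_class (\<lambda>t. lc (-t)) = ray_class \<alpha>"
      if "geo_ray \<alpha>" "ray_class \<alpha> \<noteq> ray_class c" for \<alpha>
    proof -
      have "ray_class \<alpha> \<in> vis_boundary" unfolding vis_boundary_def using that(1) by blast
      then show ?thesis using \<xi>vis[of "ray_class \<alpha>"] that(2) c\<xi> by auto
    qed
    obtain R N where K: "\<forall>n\<ge>N. \<forall>T\<ge>0. \<forall>\<gamma>. geoseg \<gamma> (Hn n x0) (c T) \<longrightarrow>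
            (\<exists>s\<in>{0..dist (Hn n x0) (c T)}. dist (\<gamma> s) (c 0) \<le> R)"
      using keyK[OF cat pr line vis b(1) _ Cb, of "\<lambda>n. Hn n x0"] b(2) zK unfolding xc_def by blast
    have K': "\<forall>n\<ge>N. \<forall>T\<ge>0. \<forall>\<gamma>. geoseg \<gamma> (Hn n x0) (c T) \<longrightarrow>
            (\<exists>s\<in>{0..dist (Hn n x0) (c T)}. dist (\<gamma> s) xc \<le> R)" using K unfolding xc_def .
    obtain \<rho>p0 where rp0: "geo_ray \<rho>p0" "\<rho>p0 0 = x0" and rp0C: "\<And>t. t \<ge> 0 \<Longrightarrow> dist (\<rho>p0 t) (\<rho>p t) \<le> 2 * dist x0 (\<rho>p 0)"
      using ray_exist[OF cat pr rp(1), of x0] by blast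
    have Pconv: "(\<lambda>n. seg x0 (Gn n xc) t) \<longlonglongrightarrow> \<rho>p0 t" if "t \<ge> 0" for t
    proof (rule basechange[OF cat rp rp0 _ ycs dvys _ that])
      show "dist (\<rho>p s) (\<rho>p0 s) \<le> 2 * dist x0 (\<rho>p 0)" if "s \<ge> 0" for s using rp0C[OF that] by (simp add: dist_commute)
      show "dist (y (\<sigma> n)) (Gn n xc) \<le> dist x xc" for n unfolding y_def Gn_def by (simp add: Fd)
    qed
    have Pdv: "filterlim (\<lambda>n. dist x0 (Gn n xc)) at_top sequentially"
      unfolding filterlim_at_top
    proof
      fix Z :: real
      have "eventually (\<lambda>n. Z + dist x x0 + dist x xc \<le> dist x (y (\<sigma> n))) sequentially"
        using dvys unfolding filterlim_at_top by blast
      then show "eventually (\<lambda>n. Z \<le> dist x0 (Gn n xc)) sequentially"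
      proof eventually_elim
        case (elim n)
        have "dist (y (\<sigma> n)) (Gn n xc) = dist x xc" unfolding y_def Gn_def by (simp add: Fd)
        moreover have "dist x (y (\<sigma> n)) \<le> dist x x0 + dist x0 (Gn n xc) + dist (Gn n xc) (y (\<sigma> n))"
          by (metis dist_triangle add.commute add_le_cancel_left dist_triangle2 order_trans)
        ultimately show ?case using elim by (simp add: dist_commute)
      qed
    qed
    have cr: "geo_ray c" using line_ray[OF line] .
    have "\<forall>n. \<exists>\<rho>. geo_ray \<rho> \<and> \<rho> 0 = x0 \<and> (\<forall>t\<ge>0. dist (\<rho> t) ((Gn n \<circ> c) t) \<le> 2 * dist x0 ((Gn n \<circ> c) 0))"
      using ray_exist[OF cat pr ray_img[OF Gd cr]] by blast
    then have "\<exists>\<rho>n. \<forall>n. geo_ray (\<rho>n n) \<and> \<rho>n n 0 = x0 \<and> (\<forall>t\<ge>0. dist (\<rho>n n t) ((Gn n \<circ> c) t) \<le> 2 * dist x0 ((Gn n \<circ> c) 0))"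
      by (rule choice)
    then obtain \<rho>n where rn0: "\<forall>n. geo_ray (\<rho>n n) \<and> \<rho>n n 0 = x0 \<and> (\<forall>t\<ge>0. dist (\<rho>n n t) ((Gn n \<circ> c) t) \<le> 2 * dist x0 ((Gn n \<circ> c) 0))"
      by blast
    have rn: "\<And>n. geo_ray (\<rho>n n)" "\<And>n. \<rho>n n 0 = x0" using rn0 by auto
    have rnC: "\<And>n t. t \<ge> 0 \<Longrightarrow> dist (\<rho>n n t) (Gn n (c t)) \<le> 2 * dist x0 (Gn n (c 0))" using rn0 by auto
    have conv: "(\<lambda>n. \<rho>n n r) \<longlonglongrightarrow> \<rho>p0 r" if "r > 0" for r
      by (rule main_estimate[where Cn = "\<lambda>n. 2 * dist x0 (Gn n (c 0))" and Gn = Gn and Hn = Hn and c = c and xc = xc and \<rho>n = \<rho>n and \<rho>p = \<rho>p0, OF cat line xc_def Gd GH HG K' rn rnC Pconv[OF less_imp_le[OF that]] Pdv that])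
    have fn: "bd_act (act (g (\<sigma> n))) \<xi> = ray_class (\<rho>n n)" for n
    proof -
      have "asymp (Gn n \<circ> c) (\<rho>n n)" using rnC by (intro asymp_bound) (simp add: dist_commute)
      from bd_act_eq[OF Gd cr this] show ?thesis using c\<xi> unfolding Gn_def F_def by simp
    qed
    have asp: "asymp \<rho>p \<rho>p0" using rp0C by (intro asymp_bound) (simp add: dist_commute)
    show ?thesis by (rule vis_limit[OF cat rp(1) rp0 asp fn rn conv])
  qed
  show ?thesis using smono vbm vbp main by blast
qed

end
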